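(* For every CICS instance $\mathbbm{I}=(\mathcal{F},\mathbb{M})$, \[ \mathrm{ComGap}(\mathbbm{I})\le \sup_{\mathcal{D}}\frac{\mathrm{ExAnte}(\mathcal{F},\mathcal{D})}{\mathrm{FreeOrder}(\mathcal{F},\mathcal{D})}, \] the supremum being over all product distributions $\mathcal{D}$ on $\mathbb{R}^n$ (i.e., the commitment gap is at most the best ratio achievable by an ex ante free-order prophet inequality for $\mathcal{F}$).
   Context: CICS: an instance $\mathbbm{I}=(\mathcal{F},\mathbb{M})$ consists of a downwards-closed $\mathcal{F}\subseteq 2^{[n]}$ and $n$ acyclic Markov decision processes $\mathcal{M}_i$, each with finite state set, root $\sigma_i$, actions $A_i(s)$ with nonnegative costs and transition distributions $\Pi_i(s,a)$, sink (terminal) states $T_i$ with values $v_i(t)\ge0$. A policy starts at the roots and repeatedly either advances some non-terminal $\mathcal{M}_i$ via an action (paying its cost, random transition), or halts selecting $S\in\mathcal{F}$ among MDPs in terminal states, collecting $\sum_{i\in S}v_i(s_i)$; utility is expected value minus expected cost, and $\mathrm{OPT}(\mathbbm{I})$ is the optimal utility. A commitment $(\pi_1,\dots,\pi_n)$ assigns to each state $s$ of $\mathcal{M}_i$ a distribution $\pi_i(s)$ over $A_i(s)$; a committing policy draws its action from $\pi_i(s)$ whenever it advances $\mathcal{M}_i$ at state $s$ (other decisions may be adaptive). $\mathrm{ComGap}(\mathbbm{I})=\mathrm{OPT}(\mathbbm{I})/\sup\{\mathrm{Util}(\mathcal{T}):\mathcal{T}\text{ committing}\}$. For a product distribution $\mathcal{D}=D_1\times\cdots\times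 D_n$: $\mathrm{ExAnte}(\mathcal{F},\mathcal{D})=\max_{q\in\mathcal{P}(\mathcal{F})}\sum_i q_iF_{D_i}(q_i)$, where $\mathcal{P}(\mathcal{F})$ is the convex hull of indicator vectors of sets in $\mathcal{F}$ and $F_D(q)$ is the expectation of a draw from $D$ conditioned on being in its top $q$ quantile (splitting point masses). A free-order online algorithm starts with $S=R=\emptyset$ and iteratively chooses (adaptively) $i\notin S\cup R$ with $S\cup\{i\}\in\mathcal{F}$ and a threshold $\tau_i$, observes $x_i$, and accepts ($S:=S\cup\{i\}$) iff $x_i\ge\tau_i$, else rejects ($R:=R\cup\{i\}$); $\mathrm{FreeOrder}(\mathcal{F},\mathcal{D})$ is the maximum expected value $\mathbb{E}[\sum_{i\in S}x_i]$ over such algorithms. *)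

theory Defs
  imports "HOL-Analysis.Analysis" "HOL-Probability.Probability"
begin

record ('s,'a) mdp =
  m_states :: "'s set"
  m_root   :: 's
  m_term   :: "'s set"
  m_acts   :: "'s \<Rightarrow> 'a set"
  m_cost   :: "'s \<Rightarrow> 'a \<Rightarrow> real"
  m_trans  :: "'s \<Rightarrow> 'a \<Rightarrow> 's pmf"
  m_val    :: "'s \<Rightarrow> real"

definition is_mdp :: "('s,'a) mdp \<Rightarrow> bool" where
  "is_mdp M \<longleftrightarrow>
     finite (m_states M) \<and> m_root M \<in> m_states M \<and> m_term M \<subseteq> m_states M \<and>
     (\<forall>t\<in>m_term M. m_acts M t = {} \<and> 0 \<le> m_val M t) \<and>
     (\<forall>s\<in>m_states M - m_term M. finite (m_acts M s) \<and> m_acts M s \<noteq> {} \<and>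
        (\<forall>a\<in>m_acts M s. 0 \<le> m_cost M s a \<and> set_pmf (m_trans M s a) \<subseteq> m_states M)) \<and>
     acyclic {(s, s'). s \<in> m_states M - m_term M \<and>
                 (\<exists>a\<in>m_acts M s. s' \<in> set_pmf (m_trans M s a))}"

definition downward_closed :: "'n set set \<Rightarrow> bool" where
  "downward_closed F \<longleftrightarrow> (\<forall>S\<in>F. \<forall>T. T \<subseteq> S \<longrightarrow> T \<in> F)"

text \<open>Policies as (finite-depth) decision trees over the whole history:
  either halt selecting a set S, or advance MDP i with an action drawn from
  a distribution p, continuing depending on the realised action and the new state.\<close>
datatype ('n,'a,'s) policy =
    Halt "'n set"
  | Adv 'n "'a pmf" "'a \<Rightarrow> 's \<Rightarrow> ('n,'a,'s) policy"

primrec util :: "('n \<Rightarrow> ('s,'a) mdp) \<Rightarrow> ('n \<Rightarrow> 's) \<Rightarrow> ('n,'a,'s) policy \<Rightarrow> real" where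
  "util M c (Halt S) = (\<Sum>i\<in>S. m_val (M i) (c i))"
| "util M c (Adv i p k) =
     measure_pmf.expectation p (\<lambda>a. - m_cost (M i) (c i) a +
        measure_pmf.expectation (m_trans (M i) (c i) a) (\<lambda>s'. util M (c(i := s')) (k a s')))"

inductive valid_pol :: "'n set set \<Rightarrow> ('n \<Rightarrow> ('s,'a) mdp) \<Rightarrow> ('n \<Rightarrow> 's) \<Rightarrow> ('n,'a,'s) policy \<Rightarrow> bool"
  for F M where
  halt: "S \<in> F \<Longrightarrow> (\<forall>i\<in>S. c i \<in> m_term (M i)) \<Longrightarrow> valid_pol F M c (Halt S)"
| adv: "c i \<notin> m_term (M i) \<Longrightarrow> set_pmf p \<subseteq> m_acts (M i) (c i) \<Longrightarrow>
        (\<forall>a\<in>set_pmf p. \<forall>s'\<in>set_pmf (m_trans (M i) (c i) a). valid_pol F M (c(i := s')) (k a s')) \<Longrightarrow>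
        valid_pol F M c (Adv i p k)"

definition roots :: "('n \<Rightarrow> ('s,'a) mdp) \<Rightarrow> 'n \<Rightarrow> 's" where
  "roots M = (\<lambda>i. m_root (M i))"

definition OPT :: "'n set set \<Rightarrow> ('n \<Rightarrow> ('s,'a) mdp) \<Rightarrow> real" where
  "OPT F M = Sup {util M (roots M) t | t. valid_pol F M (roots M) t}"

definition commitment :: "('n \<Rightarrow> ('s,'a) mdp) \<Rightarrow> ('n \<Rightarrow> 's \<Rightarrow> 'a pmf) \<Rightarrow> bool" where
  "commitment M \<pi> \<longleftrightarrow>
     (\<forall>i. \<forall>s\<in>m_states (M i) - m_term (M i). set_pmf (\<pi> i s) \<subseteq> m_acts (M i) s)"

inductive commits :: "('n \<Rightarrow> 's \<Rightarrow> 'a pmf) \<Rightarrow> ('n \<Rightarrow> 's) \<Rightarrow> ('n,'a,'s) policy \<Rightarrow> bool"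
  for \<pi> where
  "commits \<pi> c (Halt S)"
| "p = \<pi> i (c i) \<Longrightarrow> (\<forall>a s'. commits \<pi> (c(i := s')) (k a s')) \<Longrightarrow> commits \<pi> c (Adv i p k)"

definition commit_OPT :: "'n set set \<Rightarrow> ('n \<Rightarrow> ('s,'a) mdp) \<Rightarrow> real" where
  "commit_OPT F M = Sup {util M (roots M) t | t \<pi>.
      commitment M \<pi> \<and> valid_pol F M (roots M) t \<and> commits \<pi> (roots M) t}"

definition ComGap :: "'n set set \<Rightarrow> ('n \<Rightarrow> ('s,'a) mdp) \<Rightarrow> ereal" where
  "ComGap F M = ereal (OPT F M) / ereal (commit_OPT F M)"

definition product_dist :: "('n \<Rightarrow> real measure) \<Rightarrow> bool" where
  "product_dist D \<longleftrightarrow>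
     (\<forall>i. prob_space (D i) \<and> sets (D i) = sets borel \<and> integrable (D i) (\<lambda>x. x))"

definition indic_vec :: "'n set \<Rightarrow> real ^ 'n::finite" where
  "indic_vec S = (\<chi> i. if i \<in> S then 1 else 0)"

definition polytope :: "'n::finite set set \<Rightarrow> (real ^ 'n) set" where
  "polytope F = convex hull (indic_vec ` F)"

text \<open>w is the (fractional) indicator of the top-q quantile of D:
  1 above a threshold, 0 below it, fractional at the threshold (splitting point masses).\<close>
definition top_weight :: "real measure \<Rightarrow> real \<Rightarrow> (real \<Rightarrow> real) \<Rightarrow> bool" where
  "top_weight D q w \<longleftrightarrow> w \<in> borel_measurable borel \<and> (\<forall>x. 0 \<le> w x \<and> w x \<le> 1) \<and>
     (\<integral>x. w x \<partial>D) = q \<and> (\<forall>x y. x < y \<longrightarrow> 0 < w x \<longrightarrow> w y = 1)"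

text \<open>F_D(q): expectation of a draw from D conditioned on lying in its top q quantile.\<close>
definition F_top :: "real measure \<Rightarrow> real \<Rightarrow> real" where
  "F_top D q = (SOME v. \<exists>w. top_weight D q w \<and> v = (\<integral>x. x * w x \<partial>D)) / q"

definition ExAnte :: "'n::finite set set \<Rightarrow> ('n \<Rightarrow> real measure) \<Rightarrow> real" where
  "ExAnte F D = Sup {\<Sum>i\<in>UNIV. q $ i * F_top (D i) (q $ i) | q. q \<in> polytope F}"

text \<open>Free-order online algorithms as adaptive decision trees: probe i with threshold tau,
  observe x, accept iff x >= tau, continue depending on x.\<close>
datatype 'n fo_alg = FHalt | Probe 'n real "real \<Rightarrow> 'n fo_alg" "real \<Rightarrow> 'n fo_alg"

primrec fo_val :: "('n \<Rightarrow> real measure) \<Rightarrow> 'n fo_alg \<Rightarrow> real" where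
  "fo_val D FHalt = 0"
| "fo_val D (Probe i \<tau> ka kr) =
     (\<integral>x. (if \<tau> \<le> x then x + fo_val D (ka x) else fo_val D (kr x)) \<partial>D i)"

inductive fo_adm :: "'n set set \<Rightarrow> ('n \<Rightarrow> real measure) \<Rightarrow> 'n set \<Rightarrow> 'n set \<Rightarrow> 'n fo_alg \<Rightarrow> bool"
  for F D where
  "fo_adm F D S R FHalt"
| "i \<notin> S \<union> R \<Longrightarrow> insert i S \<in> F \<Longrightarrow>
   (\<forall>x. fo_adm F D (insert i S) R (ka x)) \<Longrightarrow> (\<forall>x. fo_adm F D S (insert i R) (kr x)) \<Longrightarrow>
   integrable (D i) (\<lambda>x. if \<tau> \<le> x then x + fo_val D (ka x) else fo_val D (kr x)) \<Longrightarrow>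
   fo_adm F D S R (Probe i \<tau> ka kr)"

definition FreeOrder :: "'n set set \<Rightarrow> ('n \<Rightarrow> real measure) \<Rightarrow> real" where
  "FreeOrder F D = Sup {fo_val D t | t. fo_adm F D {} {} t}"

end

theory Submission
  imports Defs
begin


abbreviation E :: "'x pmf \<Rightarrow> ('x \<Rightarrow> real) \<Rightarrow> real" where
  "E p f \<equiv> measure_pmf.expectation p f"

lemma E_cong: "(\<And>x. x \<in> set_pmf p \<Longrightarrow> f x = g x) \<Longrightarrow> E p f = E p g"
  by (intro integral_cong_AE) (auto simp: AE_measure_pmf_iff)

lemma E_add: "finite (set_pmf p) \<Longrightarrow> E p (\<lambda>x. f x + g x) = E p f + E p g"
  by (intro Bochner_Integration.integral_add integrable_measure_pmf_finite)

lemma E_diff: "finite (set_pmf p) \<Longrightarrow> E p (\<lambda>x. f x - g x) = E p f - E p g"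
  by (intro Bochner_Integration.integral_diff integrable_measure_pmf_finite)

lemma E_cmult: "E p (\<lambda>x. c * f x) = c * E p f"
  by simp

lemma E_multc: "E p (\<lambda>x. f x * c) = E p f * c"
  by simp

lemma E_const: "E p (\<lambda>x. c) = c"
  by simp

lemma E_sum: "finite (set_pmf p) \<Longrightarrow> E p (\<lambda>x. \<Sum>j\<in>J. f j x) = (\<Sum>j\<in>J. E p (f j))"
  by (intro Bochner_Integration.integral_sum integrable_measure_pmf_finite)

lemma E_mono: "finite (set_pmf p) \<Longrightarrow> (\<And>x. x \<in> set_pmf p \<Longrightarrow> f x \<le> g x) \<Longrightarrow> E p f \<le> E p g"
  by (intro integral_mono_AE integrable_measure_pmf_finite) (auto simp: AE_measure_pmf_iff)

lemma E_nonneg: "(\<And>x. x \<in> set_pmf p \<Longrightarrow> 0 \<le> f x) \<Longrightarrow> 0 \<le> E p f"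
  by (intro integral_nonneg_AE) (auto simp: AE_measure_pmf_iff)

lemma E_le_max: "finite (set_pmf p) \<Longrightarrow> \<exists>x\<in>set_pmf p. E p f \<le> f x"
proof (rule ccontr)
  assume fin: "finite (set_pmf p)" and "\<not> (\<exists>x\<in>set_pmf p. E p f \<le> f x)"
  then have lt: "\<And>x. x \<in> set_pmf p \<Longrightarrow> f x < E p f" by auto
  obtain y where y: "y \<in> set_pmf p" by (meson ex_in_conv set_pmf_not_empty)
  have "E p f < E p (\<lambda>x. E p f)"
  proof -
    have "E p f = (\<Sum>x\<in>set_pmf p. f x * pmf p x)"
      by (rule integral_measure_pmf_real[OF fin]) auto
    also have "\<dots> < (\<Sum>x\<in>set_pmf p. E p f * pmf p x)"
      using lt y fin by (intro sum_strict_mono_ex1) (auto intro!: mult_strict_right_mono mult_right_mono less_imp_le simp: pmf_positive)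
    also have "\<dots> = E p f * (\<Sum>x\<in>set_pmf p. pmf p x)" by (simp add: sum_distrib_left)
    also have "(\<Sum>x\<in>set_pmf p. pmf p x) = 1" using fin by (simp add: sum_pmf_eq_1)
    finally show ?thesis by simp
  qed
  then show False by simp
qed

lemma E_bind: "finite (set_pmf p) \<Longrightarrow> (\<And>x. x \<in> set_pmf p \<Longrightarrow> finite (set_pmf (q x))) \<Longrightarrow>
    E (bind_pmf p q) f = E p (\<lambda>x. E (q x) f)"
proof -
  assume fin: "finite (set_pmf p)" and fq: "\<And>x. x \<in> set_pmf p \<Longrightarrow> finite (set_pmf (q x))"
  have "E (bind_pmf p q) f = (\<Sum>a\<in>set_pmf p. pmf p a *\<^sub>R E (q a) f)"
    by (rule pmf_expectation_bind[OF fin fq]) auto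
  also have "\<dots> = E p (\<lambda>x. E (q x) f)"
    by (subst integral_measure_pmf_real[OF fin]) (auto simp: mult.commute)
  finally show ?thesis .
qed

lemma finite_set_bind: "finite (set_pmf p) \<Longrightarrow> (\<And>x. x \<in> set_pmf p \<Longrightarrow> finite (set_pmf (q x))) \<Longrightarrow>
    finite (set_pmf (bind_pmf p q))"
  by (simp add: set_bind_pmf)

definition mixp :: "real \<Rightarrow> 'x pmf \<Rightarrow> 'x pmf \<Rightarrow> 'x pmf" where
  "mixp \<alpha> A B = bind_pmf (bernoulli_pmf \<alpha>) (\<lambda>b. if b then A else B)"

lemma E_mixp: "finite (set_pmf A) \<Longrightarrow> finite (set_pmf B) \<Longrightarrow> 0 \<le> \<alpha> \<Longrightarrow> \<alpha> \<le> 1 \<Longrightarrow> E (mixp \<alpha> A B) f = \<alpha> * E A f + (1 - \<alpha>) * E B f"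
  unfolding mixp_def
  by (subst pmf_expectation_bind[where A=UNIV]) (auto simp: UNIV_bool)

lemma set_mixp: "set_pmf (mixp \<alpha> A B) \<subseteq> set_pmf A \<union> set_pmf B"
  unfolding mixp_def by (auto simp: set_bind_pmf split: if_splits)

lemma finite_mixp: "finite (set_pmf A) \<Longrightarrow> finite (set_pmf B) \<Longrightarrow> finite (set_pmf (mixp \<alpha> A B))"
  using set_mixp finite_subset by (metis finite_Un)


definition edges :: "('s,'a) mdp \<Rightarrow> ('s \<times> 's) set" where
  "edges M = {(s, s'). s \<in> m_states M - m_term M \<and> (\<exists>a\<in>m_acts M s. s' \<in> set_pmf (m_trans M s a))}"

definition rk :: "('s,'a) mdp \<Rightarrow> 's \<Rightarrow> nat" where
  "rk M s = card {s'. (s, s') \<in> (edges M)\<^sup>+}"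

lemma edgesI: "s \<in> m_states M \<Longrightarrow> s \<notin> m_term M \<Longrightarrow> a \<in> m_acts M s \<Longrightarrow> s' \<in> set_pmf (m_trans M s a)
  \<Longrightarrow> (s, s') \<in> edges M"
  unfolding edges_def by auto

lemma edges_sub: "is_mdp M \<Longrightarrow> edges M \<subseteq> m_states M \<times> m_states M"
proof
  fix x assume M: "is_mdp M" and x: "x \<in> edges M"
  then obtain s s' a where xs: "x = (s, s')" "s \<in> m_states M - m_term M" "a \<in> m_acts M s" "s' \<in> set_pmf (m_trans M s a)"
    unfolding edges_def by blast
  have "\<forall>s\<in>m_states M - m_term M. finite (m_acts M s) \<and> m_acts M s \<noteq> {} \<and>
        (\<forall>a\<in>m_acts M s. 0 \<le> m_cost M s a \<and> set_pmf (m_trans M s a) \<subseteq> m_states M)"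
    using M unfolding is_mdp_def by (elim conjE) assumption
  then show "x \<in> m_states M \<times> m_states M" using xs by blast
qed

lemma rk_less:
  assumes M: "is_mdp M" and e: "(s, s') \<in> edges M"
  shows "rk M s' < rk M s"
proof -
  have sub: "(edges M)\<^sup>+ \<subseteq> m_states M \<times> m_states M"
    using edges_sub[OF M] by (metis trancl_subset_Sigma)
  have fin: "finite {x. (s, x) \<in> (edges M)\<^sup>+}"
  proof (rule finite_subset[of _ "m_states M"])
    show "{x. (s, x) \<in> (edges M)\<^sup>+} \<subseteq> m_states M" using sub by blast
    show "finite (m_states M)" using M unfolding is_mdp_def by blast
  qed
  have ac: "acyclic (edges M)" using M unfolding is_mdp_def edges_def by (elim conjE) assumption
  have "{x. (s', x) \<in> (edges M)\<^sup>+} \<subset> {x. (s, x) \<in> (edges M)\<^sup>+}"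
  proof
    show "{x. (s', x) \<in> (edges M)\<^sup>+} \<subseteq> {x. (s, x) \<in> (edges M)\<^sup>+}"
      using e trancl_into_trancl2[of s s' "edges M"] by blast
    have "s' \<in> {x. (s, x) \<in> (edges M)\<^sup>+}" using e by (simp add: r_into_trancl')
    moreover have "s' \<notin> {x. (s', x) \<in> (edges M)\<^sup>+}" using ac unfolding acyclic_def by blast
    ultimately show "{x. (s', x) \<in> (edges M)\<^sup>+} \<noteq> {x. (s, x) \<in> (edges M)\<^sup>+}" by blast
  qed
  then show ?thesis unfolding rk_def using fin by (rule psubset_card_mono[rotated])
qed

lemma rk_induct:
  assumes M: "is_mdp M" and step: "\<And>s. (\<And>s'. (s, s') \<in> edges M \<Longrightarrow> P s') \<Longrightarrow> P s"
  shows "P s"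
proof (induction "rk M s" arbitrary: s rule: less_induct)
  case less
  show ?case by (rule step) (rule less, rule rk_less[OF M])
qed

definition loc :: "('s,'a) mdp \<Rightarrow> (('s \<Rightarrow> 'b) \<Rightarrow> 's \<Rightarrow> 'b) \<Rightarrow> bool" where
  "loc M F \<longleftrightarrow> (\<forall>f g s. (\<forall>s'. (s, s') \<in> edges M \<longrightarrow> f s' = g s') \<longrightarrow> F f s = F g s)"

definition fixp :: "('s,'a) mdp \<Rightarrow> (('s \<Rightarrow> 'b) \<Rightarrow> 's \<Rightarrow> 'b) \<Rightarrow> ('s \<Rightarrow> 'b) \<Rightarrow> 's \<Rightarrow> 'b" where
  "fixp M F b s = (F ^^ Suc (rk M s)) b s"

lemma stab:
  assumes M: "is_mdp M" and L: "loc M F"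
  shows "rk M s < n \<Longrightarrow> rk M s < m \<Longrightarrow> (F ^^ n) b s = (F ^^ m) b s"
proof (induction n arbitrary: s m)
  case 0 then show ?case by simp
next
  case (Suc n)
  then obtain m' where m': "m = Suc m'" by (cases m) auto
  have "F ((F ^^ n) b) s = F ((F ^^ m') b) s"
    using L unfolding loc_def
  proof (elim allE impE)
    show "\<forall>s'. (s, s') \<in> edges M \<longrightarrow> (F ^^ n) b s' = (F ^^ m') b s'"
    proof (intro allI impI)
      fix s' assume "(s, s') \<in> edges M"
      then have "rk M s' < rk M s" by (rule rk_less[OF M])
      then have "rk M s' < n" "rk M s' < m'" using Suc.prems m' by auto
      then show "(F ^^ n) b s' = (F ^^ m') b s'" by (rule Suc.IH)
    qed
  qed
  then show ?case using m' by simp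
qed

lemma fixp_eq:
  assumes M: "is_mdp M" and L: "loc M F"
  shows "fixp M F b s = F (fixp M F b) s"
proof -
  have "F (fixp M F b) s = F ((F ^^ rk M s) b) s"
    using L unfolding loc_def
  proof (elim allE impE)
    show "\<forall>s'. (s, s') \<in> edges M \<longrightarrow> fixp M F b s' = (F ^^ rk M s) b s'"
    proof (intro allI impI)
      fix s' assume "(s, s') \<in> edges M"
      then have "rk M s' < rk M s" by (rule rk_less[OF M])
      then have "(F ^^ Suc (rk M s')) b s' = (F ^^ rk M s) b s'" by (intro stab[OF M L]) auto
      then show "fixp M F b s' = (F ^^ rk M s) b s'" unfolding fixp_def .
    qed
  qed
  then show ?thesis unfolding fixp_def by simp
qed


lemma mdp_facts:
  assumes "is_mdp M"
  shows "finite (m_states M)" "m_root M \<in> m_states M" "m_term M \<subseteq> m_states M"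
   "\<And>t. t \<in> m_term M \<Longrightarrow> m_acts M t = {}" "\<And>t. t \<in> m_term M \<Longrightarrow> 0 \<le> m_val M t"
   "\<And>s. s \<in> m_states M \<Longrightarrow> s \<notin> m_term M \<Longrightarrow> finite (m_acts M s)"
   "\<And>s. s \<in> m_states M \<Longrightarrow> s \<notin> m_term M \<Longrightarrow> m_acts M s \<noteq> {}"
   "\<And>s a. s \<in> m_states M \<Longrightarrow> s \<notin> m_term M \<Longrightarrow> a \<in> m_acts M s \<Longrightarrow> 0 \<le> m_cost M s a"
   "\<And>s a. s \<in> m_states M \<Longrightarrow> s \<notin> m_term M \<Longrightarrow> a \<in> m_acts M s \<Longrightarrow> set_pmf (m_trans M s a) \<subseteq> m_states M"
  using assms unfolding is_mdp_def by blast+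

lemma mdp_trans_fin: "is_mdp M \<Longrightarrow> s \<in> m_states M \<Longrightarrow> s \<notin> m_term M \<Longrightarrow> a \<in> m_acts M s \<Longrightarrow> finite (set_pmf (m_trans M s a))"
  using mdp_facts(1,9) finite_subset by metis


section \<open>MDP value function for price lambda\<close>

definition WF :: "('s,'a) mdp \<Rightarrow> real \<Rightarrow> ('s \<Rightarrow> real) \<Rightarrow> 's \<Rightarrow> real" where
  "WF M l f s = (if s \<in> m_states M \<and> s \<notin> m_term M then
      max 0 (Max ((\<lambda>a. - m_cost M s a + E (m_trans M s a) f) ` m_acts M s))
    else if s \<in> m_term M then max 0 (m_val M s - l) else 0)"

definition W :: "('s,'a) mdp \<Rightarrow> real \<Rightarrow> 's \<Rightarrow> real" where
  "W M l = fixp M (WF M l) (\<lambda>_. 0)"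

lemma loc_WF:
  fixes M :: "('s,'a) mdp"
  shows "loc M (WF M l)"
  unfolding loc_def
proof (intro allI impI)
  fix f g :: "'s \<Rightarrow> real" and s
  assume h: "\<forall>s'. (s, s') \<in> edges M \<longrightarrow> f s' = g s'"
  show "WF M l f s = WF M l g s"
  proof (cases "s \<in> m_states M \<and> s \<notin> m_term M")
    case True
    have "(\<lambda>a. - m_cost M s a + E (m_trans M s a) f) ` m_acts M s =
          (\<lambda>a. - m_cost M s a + E (m_trans M s a) g) ` m_acts M s"
    proof (rule image_cong[OF refl])
      fix a assume "a \<in> m_acts M s"
      then have "E (m_trans M s a) f = E (m_trans M s a) g"
        using True h edgesI[of s M a] by (intro E_cong) auto
      then show "- m_cost M s a + E (m_trans M s a) f = - m_cost M s a + E (m_trans M s a) g" by simp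
    qed
    then show ?thesis unfolding WF_def using True by simp
  next
    case False
    then show ?thesis unfolding WF_def by simp
  qed
qed

lemma W_eq: "is_mdp M \<Longrightarrow> W M l s = WF M l (W M l) s"
  unfolding W_def by (rule fixp_eq[OF _ loc_WF])

lemma W_nonneg: "is_mdp M \<Longrightarrow> 0 \<le> W M l s"
  by (subst W_eq) (auto simp: WF_def)

lemma W_term: "is_mdp M \<Longrightarrow> s \<in> m_term M \<Longrightarrow> W M l s = max 0 (m_val M s - l)"
  by (subst W_eq) (auto simp: WF_def)

lemma W_bellman:
  assumes M: "is_mdp M" and s: "s \<in> m_states M" "s \<notin> m_term M" and a: "a \<in> m_acts M s"
  shows "- m_cost M s a + E (m_trans M s a) (W M l) \<le> W M l s"
proof -
  have fin: "finite (m_acts M s)" using mdp_facts(6)[OF M s] .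
  have "- m_cost M s a + E (m_trans M s a) (W M l) \<le>
        Max ((\<lambda>a. - m_cost M s a + E (m_trans M s a) (W M l)) ` m_acts M s)"
    using fin a by (intro Max_ge) auto
  also have "\<dots> \<le> WF M l (W M l) s" using s by (simp add: WF_def)
  also have "\<dots> = W M l s" by (rule W_eq[OF M, symmetric])
  finally show ?thesis .
qed

section \<open>Selection probabilities and the Lagrangian bound\<close>

primrec Qp :: "('n \<Rightarrow> ('s,'a) mdp) \<Rightarrow> ('n \<Rightarrow> 's) \<Rightarrow> ('n,'a,'s) policy \<Rightarrow> 'n \<Rightarrow> real" where
  "Qp M c (Halt S) j = (if j \<in> S then 1 else 0)"
| "Qp M c (Adv i p k) j = E p (\<lambda>a. E (m_trans (M i) (c i) a) (\<lambda>s'. Qp M (c(i := s')) (k a s') j))"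

lemma valid_fin:
  assumes M: "is_mdp (M i)" and c: "c i \<in> m_states (M i)" "c i \<notin> m_term (M i)"
    and p: "set_pmf p \<subseteq> m_acts (M i) (c i)"
  shows "finite (set_pmf p)"
    "\<And>a. a \<in> set_pmf p \<Longrightarrow> finite (set_pmf (m_trans (M i) (c i) a))"
    "\<And>a s'. a \<in> set_pmf p \<Longrightarrow> s' \<in> set_pmf (m_trans (M i) (c i) a) \<Longrightarrow> s' \<in> m_states (M i)"
  using mdp_facts(6,9)[OF M c] mdp_trans_fin[OF M c] p finite_subset by blast+

lemma sum_upd:
  fixes f :: "'n::finite \<Rightarrow> 's \<Rightarrow> real"
  shows "(\<Sum>j\<in>UNIV. f j ((c(i := s')) j)) = (\<Sum>j\<in>UNIV. f j (c j)) - f i (c i) + f i s'"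
proof -
  have "(\<Sum>j\<in>UNIV. f j ((c(i := s')) j)) = f i s' + (\<Sum>j\<in>UNIV - {i}. f j ((c(i := s')) j))"
    by (subst sum.remove[of _ i]) auto
  also have "(\<Sum>j\<in>UNIV - {i}. f j ((c(i := s')) j)) = (\<Sum>j\<in>UNIV - {i}. f j (c j))"
    by (intro sum.cong) auto
  also have "\<dots> = (\<Sum>j\<in>UNIV. f j (c j)) - f i (c i)"
    by (subst sum.remove[of _ i]) auto
  finally show ?thesis by simp
qed

lemma lag:
  fixes M :: "'n::finite \<Rightarrow> ('s,'a) mdp" and l :: "'n \<Rightarrow> real"
  assumes "valid_pol F M c t" and M: "\<forall>j. is_mdp (M j)" and "\<forall>j. c j \<in> m_states (M j)"
  shows "util M c t \<le> (\<Sum>j\<in>UNIV. l j * Qp M c t j) + (\<Sum>j\<in>UNIV. W (M j) (l j) (c j))"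
  using assms(1,3)
proof (induction rule: valid_pol.induct)
  case (halt S c)
  have "util M c (Halt S) = (\<Sum>j\<in>S. l j + (m_val (M j) (c j) - l j))" by simp
  also have "\<dots> = (\<Sum>j\<in>S. l j) + (\<Sum>j\<in>S. (m_val (M j) (c j) - l j))" by (rule sum.distrib)
  also have "(\<Sum>j\<in>S. (m_val (M j) (c j) - l j)) \<le> (\<Sum>j\<in>S. W (M j) (l j) (c j))"
    using halt M by (intro sum_mono) (simp add: W_term)
  also have "\<dots> \<le> (\<Sum>j\<in>UNIV. W (M j) (l j) (c j))"
    using M by (intro sum_mono2) (auto intro!: W_nonneg)
  also have "(\<Sum>j\<in>S. l j) = (\<Sum>j\<in>UNIV. l j * Qp M c (Halt S) j)"
    by (simp add: if_distrib sum.If_cases)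
  finally show ?case by simp
next
  case (adv c i p k)
  let ?T = "\<lambda>a. m_trans (M i) (c i) a"
  let ?L = "\<lambda>a s'. (\<Sum>j\<in>UNIV. l j * Qp M (c(i := s')) (k a s') j)"
  let ?C0 = "(\<Sum>j\<in>UNIV. W (M j) (l j) (c j)) - W (M i) (l i) (c i)"
  have Mi: "is_mdp (M i)" using M by auto
  have ci: "c i \<in> m_states (M i)" using adv by auto
  note fins = valid_fin[of M i c p, OF Mi ci adv(1) adv(2)]
  have IH: "util M (c(i := s')) (k a s') \<le> ?L a s' + (?C0 + W (M i) (l i) s')"
    if "a \<in> set_pmf p" "s' \<in> set_pmf (?T a)" for a s'
  proof -
    have "\<forall>j. (c(i := s')) j \<in> m_states (M j)" using adv(4) fins(3)[OF that] by auto
    then have "util M (c(i := s')) (k a s') \<le> ?L a s' + (\<Sum>j\<in>UNIV. W (M j) (l j) ((c(i := s')) j))"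
      using adv(3) that by blast
    then show ?thesis using sum_upd[of "\<lambda>j. W (M j) (l j)" c i s'] by simp
  qed
  have "util M c (Adv i p k) = E p (\<lambda>a. - m_cost (M i) (c i) a + E (?T a) (\<lambda>s'. util M (c(i := s')) (k a s')))"
    by simp
  also have "\<dots> \<le> E p (\<lambda>a. - m_cost (M i) (c i) a + E (?T a) (\<lambda>s'. ?L a s' + (?C0 + W (M i) (l i) s')))"
    using fins IH by (intro E_mono add_left_mono) auto
  also have "\<dots> = E p (\<lambda>a. E (?T a) (\<lambda>s'. ?L a s') + ?C0 + (- m_cost (M i) (c i) a + E (?T a) (W (M i) (l i))))"
    using fins by (intro E_cong) (simp add: E_add)
  also have "\<dots> \<le> E p (\<lambda>a. E (?T a) (\<lambda>s'. ?L a s') + ?C0 + W (M i) (l i) (c i))"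
    using fins adv(1,2) ci by (intro E_mono add_left_mono W_bellman Mi) auto
  also have "\<dots> = E p (\<lambda>a. E (?T a) (\<lambda>s'. ?L a s')) + (\<Sum>j\<in>UNIV. W (M j) (l j) (c j))"
    using fins by (simp add: E_add)
  also have "E p (\<lambda>a. E (?T a) (\<lambda>s'. ?L a s')) = (\<Sum>j\<in>UNIV. l j * Qp M c (Adv i p k) j)"
  proof -
    have "E p (\<lambda>a. E (?T a) (\<lambda>s'. ?L a s')) =
          E p (\<lambda>a. \<Sum>j\<in>UNIV. l j * E (?T a) (\<lambda>s'. Qp M (c(i := s')) (k a s') j))"
      using fins by (intro E_cong) (simp add: E_sum)
    also have "\<dots> = (\<Sum>j\<in>UNIV. l j * Qp M c (Adv i p k) j)"
      using fins by (simp add: E_sum)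
    finally show ?thesis .
  qed
  finally show ?case by simp
qed

lemma conv_E:
  fixes f :: "'x \<Rightarrow> 'n::finite \<Rightarrow> real"
  assumes C: "convex C" and fin: "finite (set_pmf p)" and h: "\<And>x. x \<in> set_pmf p \<Longrightarrow> (\<chi> j. f x j) \<in> C"
  shows "(\<chi> j. E p (\<lambda>x. f x j)) \<in> C"
proof -
  have eq: "(\<chi> j. E p (\<lambda>x. f x j)) = (\<Sum>x\<in>set_pmf p. pmf p x *\<^sub>R (\<chi> j. f x j))"
  proof (rule vec_eq_iff[THEN iffD2], rule allI)
    fix j
    have "E p (\<lambda>x. f x j) = (\<Sum>x\<in>set_pmf p. f x j * pmf p x)"
      by (rule integral_measure_pmf_real[OF fin]) auto
    then show "(\<chi> j. E p (\<lambda>x. f x j)) $ j = (\<Sum>x\<in>set_pmf p. pmf p x *\<^sub>R (\<chi> j. f x j)) $ j"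
      by (simp add: mult.commute)
  qed
  show ?thesis unfolding eq
    by (rule convex_sum[OF fin C]) (use fin h in \<open>auto simp: sum_pmf_eq_1\<close>)
qed

lemma Q_poly:
  fixes M :: "'n::finite \<Rightarrow> ('s,'a) mdp"
  assumes "valid_pol F M c t" and M: "\<forall>j. is_mdp (M j)" and "\<forall>j. c j \<in> m_states (M j)"
  shows "(\<chi> j. Qp M c t j) \<in> polytope F"
  using assms(1,3)
proof (induction rule: valid_pol.induct)
  case (halt S c)
  have "(\<chi> j. Qp M c (Halt S) j) = indic_vec S" by (simp add: indic_vec_def)
  then show ?case using halt unfolding polytope_def by (simp add: hull_inc)
next
  case (adv c i p k)
  have Mi: "is_mdp (M i)" using M by auto
  have ci: "c i \<in> m_states (M i)" using adv by auto
  note fins = valid_fin[of M i c p, OF Mi ci adv(1) adv(2)]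
  have cv: "convex (polytope F)" unfolding polytope_def by simp
  have inner: "(\<chi> j. E (m_trans (M i) (c i) a) (\<lambda>s'. Qp M (c(i := s')) (k a s') j)) \<in> polytope F"
    if a: "a \<in> set_pmf p" for a
  proof (rule conv_E[OF cv fins(2)[OF a]])
    fix s' assume s': "s' \<in> set_pmf (m_trans (M i) (c i) a)"
    have "\<forall>j. (c(i := s')) j \<in> m_states (M j)" using adv(4) fins(3)[OF a s'] by auto
    then show "(\<chi> j. Qp M (c(i := s')) (k a s') j) \<in> polytope F" using adv(3) a s' by blast
  qed
  show ?case
    using conv_E[OF cv fins(1), of "\<lambda>a j. E (m_trans (M i) (c i) a) (\<lambda>s'. Qp M (c(i := s')) (k a s') j)"] inner
    by simp
qed

lemma poly_box:
  fixes x :: "real ^ 'n::finite"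
  assumes "x \<in> polytope F"
  shows "0 \<le> x $ j \<and> x $ j \<le> 1"
proof -
  have cv: "convex {x :: real ^ 'n. 0 \<le> x $ j \<and> x $ j \<le> 1}"
    unfolding convex_def
  proof (intro allI impI ballI, clarify)
    fix x y :: "real ^ 'n" and u v :: real
    assume "0 \<le> x $ j" "x $ j \<le> 1" "0 \<le> y $ j" "y $ j \<le> 1" "0 \<le> u" "0 \<le> v" "u + v = 1"
    then show "0 \<le> (u *\<^sub>R x + v *\<^sub>R y) $ j \<and> (u *\<^sub>R x + v *\<^sub>R y) $ j \<le> 1"
      by simp (smt (verit) mult_left_le mult_nonneg_nonneg)
  qed
  have "indic_vec ` F \<subseteq> {x :: real ^ 'n. 0 \<le> x $ j \<and> x $ j \<le> 1}"
    by (auto simp: indic_vec_def)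
  then have "polytope F \<subseteq> {x. 0 \<le> x $ j \<and> x $ j \<le> 1}"
    unfolding polytope_def using cv by (rule hull_minimal)
  then show ?thesis using assms by blast
qed


definition Epos :: "real pmf \<Rightarrow> real \<Rightarrow> real" where
  "Epos K l = E K (\<lambda>x. max 0 (x - l))"

lemma Epos_sum: "finite (set_pmf K) \<Longrightarrow> Epos K l = (\<Sum>x\<in>set_pmf K. max 0 (x - l) * pmf K x)"
  unfolding Epos_def by (rule integral_measure_pmf_real) auto

lemma Epos_nonneg: "0 \<le> Epos K l"
  unfolding Epos_def by (rule E_nonneg) simp

lemma Epos_anti: "finite (set_pmf K) \<Longrightarrow> l \<le> l' \<Longrightarrow> Epos K l' \<le> Epos K l"
  unfolding Epos_def by (intro E_mono) auto

lemma Epos_ge: "finite (set_pmf K) \<Longrightarrow> E K (\<lambda>x. x) - l \<le> Epos K l"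
proof -
  assume f: "finite (set_pmf K)"
  have "E K (\<lambda>x. x) - l = E K (\<lambda>x. x - l)" using f by (simp add: E_diff)
  also have "\<dots> \<le> Epos K l" unfolding Epos_def using f by (intro E_mono) auto
  finally show ?thesis .
qed

lemma Epos_zero: "(\<And>x. x \<in> set_pmf K \<Longrightarrow> x \<le> l) \<Longrightarrow> Epos K l = 0"
proof -
  assume h: "\<And>x. x \<in> set_pmf K \<Longrightarrow> x \<le> l"
  have "Epos K l = E K (\<lambda>x. 0)" unfolding Epos_def by (rule E_cong) (use h in auto)
  then show ?thesis by simp
qed

lemma Epos_cont: "finite (set_pmf K) \<Longrightarrow> continuous_on A (Epos K)"
proof -
  assume f: "finite (set_pmf K)"
  have "Epos K = (\<lambda>l. \<Sum>x\<in>set_pmf K. max 0 (x - l) * pmf K x)" using Epos_sum[OF f] by auto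
  then show ?thesis by (simp add: continuous_intros)
qed

lemma E_ge_Min: "finite (set_pmf K) \<Longrightarrow> Min (set_pmf K) \<le> E K (\<lambda>x. x)"
proof -
  assume f: "finite (set_pmf K)"
  have "E K (\<lambda>x. Min (set_pmf K)) \<le> E K (\<lambda>x. x)" using f by (intro E_mono) auto
  then show ?thesis by simp
qed

lemma Epos_map_min:
  assumes f: "finite (set_pmf K)" and g: "Epos K g = c" and c: "0 < c"
  shows "Epos (map_pmf (min g) K) l = max 0 (Epos K l - c)"
proof (cases "l < g")
  case True
  have "Epos (map_pmf (min g) K) l = E K (\<lambda>x. max 0 (x - l) - max 0 (x - g))"
    unfolding Epos_def integral_map_pmf by (rule E_cong) (use True in \<open>auto simp: min_def max_def\<close>)
  also have "\<dots> = Epos K l - c" using f g by (simp add: E_diff Epos_def)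
  also have "\<dots> = max 0 (Epos K l - c)" using Epos_anti[OF f, of l g] True g by simp
  finally show ?thesis .
next
  case False
  have "Epos (map_pmf (min g) K) l = E K (\<lambda>x. 0)"
    unfolding Epos_def integral_map_pmf by (rule E_cong) (use False in \<open>auto simp: min_def max_def\<close>)
  also have "\<dots> = max 0 (Epos K l - c)" using Epos_anti[OF f, of g l] False g by simp
  finally show ?thesis .
qed

definition gval :: "real pmf \<Rightarrow> real \<Rightarrow> real" where
  "gval K c = (if c \<le> 0 then Max (set_pmf K) else (SOME g. Epos K g = c))"

lemma gval_ex:
  assumes f: "finite (set_pmf K)" and c: "0 < c"
  shows "Epos K (gval K c) = c"
proof -
  let ?a = "Min (set_pmf K) - c" and ?b = "Max (set_pmf K)"
  have ne: "set_pmf K \<noteq> {}" by (rule set_pmf_not_empty)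
  have fb: "Epos K ?b = 0" using f ne by (intro Epos_zero) auto
  have fa: "c \<le> Epos K ?a" using Epos_ge[OF f, of ?a] E_ge_Min[OF f] by linarith
  obtain y where y: "y \<in> set_pmf K" using ne by blast
  have ab: "?a \<le> ?b" using f y c Min_le[OF f y] Max_ge[OF f y] by linarith
  have "\<exists>g. ?a \<le> g \<and> g \<le> ?b \<and> Epos K g = c"
    by (rule IVT2') (use fb fa ab c Epos_cont[OF f] in auto)
  then have "\<exists>g. Epos K g = c" by blast
  then have "Epos K (SOME g. Epos K g = c) = c" by (rule someI_ex)
  then show ?thesis unfolding gval_def using c by simp
qed

lemma gval_prop1:
  assumes f: "finite (set_pmf K)" and c: "0 \<le> c"
  shows "Epos (map_pmf (min (gval K c)) K) l = max 0 (Epos K l - c)"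
proof (cases "c = 0")
  case True
  have "Epos (map_pmf (min (gval K c)) K) l = Epos K l"
    unfolding Epos_def integral_map_pmf gval_def using True
    by (simp, intro E_cong) (simp add: min_absorb2[OF Max_ge[OF f]])
  then show ?thesis using True Epos_nonneg by simp
next
  case False
  then show ?thesis using Epos_map_min[OF f gval_ex[OF f]] c by simp
qed

lemma gval_prop2:
  assumes f: "finite (set_pmf K)" and c: "0 \<le> c"
  shows "Epos K (min m (gval K c)) - c = max 0 (Epos K m - c)"
proof (cases "c = 0")
  case True
  then have g: "gval K c = Max (set_pmf K)" unfolding gval_def by simp
  have ne: "set_pmf K \<noteq> {}" by (rule set_pmf_not_empty)
  show ?thesis
  proof (cases "m \<le> gval K c")
    case True
    then show ?thesis using \<open>c = 0\<close> Epos_nonneg by (simp add: min_def)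
  next
    case False
    then have "Epos K m = 0" "Epos K (gval K c) = 0" using f ne g
      by (auto intro!: Epos_zero dest: Max_ge[OF f])
    then show ?thesis using \<open>c = 0\<close> False by (simp add: min_def)
  qed
next
  case False
  then have cp: "0 < c" using c by simp
  have ge: "Epos K (gval K c) = c" by (rule gval_ex[OF f cp])
  show ?thesis
  proof (cases "m \<le> gval K c")
    case True
    then show ?thesis using Epos_anti[OF f True] ge by (simp add: min_def)
  next
    case False
    then show ?thesis using Epos_anti[OF f, of "gval K c" m] ge by (simp add: min_def)
  qed
qed


section \<open>Markov chains induced by deterministic commitments\<close>

definition valid_sig :: "('s,'a) mdp \<Rightarrow> ('s \<Rightarrow> 'a) \<Rightarrow> bool" where
  "valid_sig M \<sigma> \<longleftrightarrow> (\<forall>s. s \<in> m_states M \<longrightarrow> s \<notin> m_term M \<longrightarrow> \<sigma> s \<in> m_acts M s)"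

definition KF :: "('s,'a) mdp \<Rightarrow> ('s \<Rightarrow> 'a) \<Rightarrow> ('s \<Rightarrow> real pmf) \<Rightarrow> 's \<Rightarrow> real pmf" where
  "KF M \<sigma> f s = (if s \<in> m_states M \<and> s \<notin> m_term M then
      map_pmf (min (gval (bind_pmf (m_trans M s (\<sigma> s)) f) (m_cost M s (\<sigma> s)))) (bind_pmf (m_trans M s (\<sigma> s)) f)
    else return_pmf (if s \<in> m_term M then m_val M s else 0))"

definition kap :: "('s,'a) mdp \<Rightarrow> ('s \<Rightarrow> 'a) \<Rightarrow> 's \<Rightarrow> real pmf" where
  "kap M \<sigma> = fixp M (KF M \<sigma>) (\<lambda>_. return_pmf 0)"

definition Kp :: "('s,'a) mdp \<Rightarrow> ('s \<Rightarrow> 'a) \<Rightarrow> 's \<Rightarrow> real pmf" where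
  "Kp M \<sigma> s = bind_pmf (m_trans M s (\<sigma> s)) (kap M \<sigma>)"

definition gg :: "('s,'a) mdp \<Rightarrow> ('s \<Rightarrow> 'a) \<Rightarrow> 's \<Rightarrow> real" where
  "gg M \<sigma> s = gval (Kp M \<sigma> s) (m_cost M s (\<sigma> s))"

context
  fixes M :: "('s,'a) mdp" and \<sigma> :: "'s \<Rightarrow> 'a"
  assumes M: "is_mdp M" and V: "valid_sig M \<sigma>"
begin

lemma sig_act: "s \<in> m_states M \<Longrightarrow> s \<notin> m_term M \<Longrightarrow> \<sigma> s \<in> m_acts M s"
  using V unfolding valid_sig_def by blast

lemma sig_edge: "s \<in> m_states M \<Longrightarrow> s \<notin> m_term M \<Longrightarrow> s' \<in> set_pmf (m_trans M s (\<sigma> s)) \<Longrightarrow> (s, s') \<in> edges M"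
  using sig_act[of s] edgesI[of s M "\<sigma> s" s'] by blast

lemma sig_tr_states: "s \<in> m_states M \<Longrightarrow> s \<notin> m_term M \<Longrightarrow> s' \<in> set_pmf (m_trans M s (\<sigma> s)) \<Longrightarrow> s' \<in> m_states M"
  using sig_act mdp_facts(9)[OF M] by blast

lemma sig_tr_fin: "s \<in> m_states M \<Longrightarrow> s \<notin> m_term M \<Longrightarrow> finite (set_pmf (m_trans M s (\<sigma> s)))"
  using sig_act mdp_trans_fin[OF M] by blast

lemma sig_cost: "s \<in> m_states M \<Longrightarrow> s \<notin> m_term M \<Longrightarrow> 0 \<le> m_cost M s (\<sigma> s)"
  using sig_act mdp_facts(8)[OF M] by blast

lemma loc_KF: "loc M (KF M \<sigma>)"
  unfolding loc_def
proof (intro allI impI)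
  fix f g :: "'s \<Rightarrow> real pmf" and s
  assume h: "\<forall>s'. (s, s') \<in> edges M \<longrightarrow> f s' = g s'"
  show "KF M \<sigma> f s = KF M \<sigma> g s"
  proof (cases "s \<in> m_states M \<and> s \<notin> m_term M")
    case True
    have "bind_pmf (m_trans M s (\<sigma> s)) f = bind_pmf (m_trans M s (\<sigma> s)) g"
      by (rule bind_pmf_cong[OF refl]) (use h True sig_edge in blast)
    then show ?thesis unfolding KF_def by (simp only: if_P[OF True])
  next
    case False
    then show ?thesis unfolding KF_def by (simp only: if_not_P[OF False] if_False)
  qed
qed

lemma kap_eq: "kap M \<sigma> s = KF M \<sigma> (kap M \<sigma>) s"
  unfolding kap_def by (rule fixp_eq[OF M loc_KF])

lemma kap_nt: "s \<in> m_states M \<Longrightarrow> s \<notin> m_term M \<Longrightarrow> kap M \<sigma> s = map_pmf (min (gg M \<sigma> s)) (Kp M \<sigma> s)"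
  by (subst kap_eq) (simp add: KF_def gg_def Kp_def)

lemma kap_term: "s \<in> m_term M \<Longrightarrow> kap M \<sigma> s = return_pmf (m_val M s)"
  by (subst kap_eq) (simp add: KF_def)

lemma kap_fin: "finite (set_pmf (kap M \<sigma> s))"
proof (induction s rule: rk_induct[OF M])
  case (1 s)
  show ?case
  proof (cases "s \<in> m_states M \<and> s \<notin> m_term M")
    case True
    have "finite (set_pmf (Kp M \<sigma> s))" unfolding Kp_def
      using True sig_tr_fin 1 sig_edge by (intro finite_set_bind) auto
    then show ?thesis using True by (simp add: kap_nt)
  next
    case False
    have "kap M \<sigma> s = return_pmf (if s \<in> m_term M then m_val M s else 0)"
      by (subst kap_eq) (simp only: KF_def if_not_P[OF False])
    then show ?thesis by simp
  qed
qed

lemma Kp_fin: "s \<in> m_states M \<Longrightarrow> s \<notin> m_term M \<Longrightarrow> finite (set_pmf (Kp M \<sigma> s))"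
  unfolding Kp_def using sig_tr_fin kap_fin by (intro finite_set_bind) auto

lemma E_Kp: "s \<in> m_states M \<Longrightarrow> s \<notin> m_term M \<Longrightarrow>
   E (Kp M \<sigma> s) f = E (m_trans M s (\<sigma> s)) (\<lambda>s'. E (kap M \<sigma> s') f)"
  unfolding Kp_def using sig_tr_fin kap_fin by (intro E_bind) auto

lemma Epos_kap_nt: "s \<in> m_states M \<Longrightarrow> s \<notin> m_term M \<Longrightarrow>
    Epos (kap M \<sigma> s) l = max 0 (Epos (Kp M \<sigma> s) l - m_cost M s (\<sigma> s))"
  unfolding kap_nt gg_def by (rule gval_prop1[OF Kp_fin sig_cost])

lemma Epos_Kp: "s \<in> m_states M \<Longrightarrow> s \<notin> m_term M \<Longrightarrow>
    Epos (Kp M \<sigma> s) l = E (m_trans M s (\<sigma> s)) (\<lambda>s'. Epos (kap M \<sigma> s') l)"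
  unfolding Epos_def by (rule E_Kp)

lemma Epos_kap_term: "s \<in> m_term M \<Longrightarrow> Epos (kap M \<sigma> s) l = max 0 (m_val M s - l)"
  by (simp add: kap_term Epos_def)

lemma kap_le_W: "s \<in> m_states M \<Longrightarrow> Epos (kap M \<sigma> s) l \<le> W M l s"
proof (induction s rule: rk_induct[OF M])
  case (1 s)
  show ?case
  proof (cases "s \<in> m_term M")
    case True
    then show ?thesis by (simp add: Epos_kap_term W_term[OF M])
  next
    case False
    have "Epos (kap M \<sigma> s) l = max 0 (E (m_trans M s (\<sigma> s)) (\<lambda>s'. Epos (kap M \<sigma> s') l) - m_cost M s (\<sigma> s))"
      using 1(2) False by (simp add: Epos_kap_nt Epos_Kp)
    also have "\<dots> \<le> max 0 (E (m_trans M s (\<sigma> s)) (W M l) - m_cost M s (\<sigma> s))"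
    proof (intro max.mono diff_right_mono E_mono order.refl)
      show "finite (set_pmf (m_trans M s (\<sigma> s)))" by (rule sig_tr_fin[OF 1(2) False])
      fix s' assume s': "s' \<in> set_pmf (m_trans M s (\<sigma> s))"
      show "Epos (kap M \<sigma> s') l \<le> W M l s'"
        by (rule 1(1)[OF sig_edge[OF 1(2) False s'] sig_tr_states[OF 1(2) False s']])
    qed
    also have "\<dots> \<le> W M l s"
      using W_bellman[OF M 1(2) False sig_act[OF 1(2) False], of l] W_nonneg[OF M, of l s] by simp
    finally show ?thesis .
  qed
qed

end

definition gsig :: "('s,'a) mdp \<Rightarrow> real \<Rightarrow> 's \<Rightarrow> 'a" where
  "gsig M l s = (if s \<in> m_states M \<and> s \<notin> m_term M then
     (SOME a. a \<in> m_acts M s \<and> (\<forall>b\<in>m_acts M s. - m_cost M s b + E (m_trans M s b) (W M l)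
        \<le> - m_cost M s a + E (m_trans M s a) (W M l))) else undefined)"

lemma gsig_prop:
  assumes M: "is_mdp M" and s: "s \<in> m_states M" "s \<notin> m_term M"
  shows "gsig M l s \<in> m_acts M s \<and> (\<forall>b\<in>m_acts M s. - m_cost M s b + E (m_trans M s b) (W M l)
        \<le> - m_cost M s (gsig M l s) + E (m_trans M s (gsig M l s)) (W M l))"
proof -
  let ?f = "\<lambda>a. - m_cost M s a + E (m_trans M s a) (W M l)"
  let ?g = "SOME a. a \<in> m_acts M s \<and> (\<forall>b\<in>m_acts M s. ?f b \<le> ?f a)"
  have fin: "finite (m_acts M s)" and ne: "m_acts M s \<noteq> {}" using mdp_facts(6,7)[OF M s] by auto
  have "Max (?f ` m_acts M s) \<in> ?f ` m_acts M s" by (rule Max_in) (use fin ne in auto)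
  then obtain a where a: "a \<in> m_acts M s" "?f a = Max (?f ` m_acts M s)" by (auto simp only: image_iff)
  have "\<forall>b\<in>m_acts M s. ?f b \<le> ?f a"
  proof
    fix b assume b: "b \<in> m_acts M s"
    have "?f b \<le> Max (?f ` m_acts M s)" using fin b by (intro Max_ge) auto
    then show "?f b \<le> ?f a" using a(2) by simp
  qed
  then have "\<exists>a. a \<in> m_acts M s \<and> (\<forall>b\<in>m_acts M s. ?f b \<le> ?f a)" using a(1) by blast
  from someI_ex[OF this] have "?g \<in> m_acts M s \<and> (\<forall>b\<in>m_acts M s. ?f b \<le> ?f ?g)" .
  moreover have "gsig M l s = ?g" unfolding gsig_def using s by simp
  ultimately show ?thesis by simp
qed

lemma gsig_valid: "is_mdp M \<Longrightarrow> valid_sig M (gsig M l)"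
  unfolding valid_sig_def
proof (intro allI impI)
  fix s assume "is_mdp M" "s \<in> m_states M" "s \<notin> m_term M"
  from gsig_prop[OF this, of l] show "gsig M l s \<in> m_acts M s" by (rule conjunct1)
qed

lemma kap_greedy:
  assumes M: "is_mdp M"
  shows "s \<in> m_states M \<Longrightarrow> Epos (kap M (gsig M l) s) l = W M l s"
proof (induction s rule: rk_induct[OF M])
  case (1 s)
  note V = gsig_valid[OF M, of l]
  show ?case
  proof (cases "s \<in> m_term M")
    case True
    then show ?thesis by (simp add: Epos_kap_term[OF M V] W_term[OF M])
  next
    case False
    let ?a = "gsig M l s"
    let ?f = "\<lambda>a. - m_cost M s a + E (m_trans M s a) (W M l)"
    have fin: "finite (m_acts M s)" using mdp_facts(6)[OF M 1(2) False] .
    have "Epos (kap M (gsig M l) s) l = max 0 (E (m_trans M s ?a) (\<lambda>s'. Epos (kap M (gsig M l) s') l) - m_cost M s ?a)"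
      using 1(2) False by (simp add: Epos_kap_nt[OF M V] Epos_Kp[OF M V])
    also have "\<dots> = max 0 (E (m_trans M s ?a) (W M l) - m_cost M s ?a)"
    proof -
      have "E (m_trans M s ?a) (\<lambda>s'. Epos (kap M (gsig M l) s') l) = E (m_trans M s ?a) (W M l)"
      proof (rule E_cong)
        fix s' assume s': "s' \<in> set_pmf (m_trans M s ?a)"
        show "Epos (kap M (gsig M l) s') l = W M l s'"
          by (rule 1(1)[OF sig_edge[OF M V 1(2) False s'] sig_tr_states[OF M V 1(2) False s']])
      qed
      then show ?thesis by simp
    qed
    also have "\<dots> = max 0 (Max (?f ` m_acts M s))"
    proof -
      have "Max (?f ` m_acts M s) = ?f ?a"
        using gsig_prop[OF M 1(2) False, of l] fin by (intro Max_eqI) auto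
      then show ?thesis by simp
    qed
    also have "\<dots> = W M l s" using W_eq[OF M, of l s] 1(2) False by (simp add: WF_def)
    finally show ?thesis .
  qed
qed

definition sigs :: "('s,'a) mdp \<Rightarrow> ('s \<Rightarrow> 'a) set" where
  "sigs M = PiE (m_states M - m_term M) (m_acts M)"

lemma sigs_fin: "is_mdp M \<Longrightarrow> finite (sigs M)"
  unfolding sigs_def by (intro finite_PiE) (auto dest: mdp_facts(1,6))

lemma sigs_valid: "\<sigma> \<in> sigs M \<Longrightarrow> valid_sig M \<sigma>"
  unfolding sigs_def valid_sig_def by auto

lemma gsig_in: "is_mdp M \<Longrightarrow> gsig M l \<in> sigs M"
proof -
  assume M: "is_mdp M"
  have "gsig M l \<in> Pi (m_states M - m_term M) (m_acts M)"
    using gsig_prop[OF M] by auto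
  moreover have "gsig M l \<in> extensional (m_states M - m_term M)"
    unfolding extensional_def gsig_def by auto
  ultimately show ?thesis unfolding sigs_def PiE_def by blast
qed

lemma W_Max:
  assumes M: "is_mdp M" and s: "s \<in> m_states M"
  shows "W M l s = Max ((\<lambda>\<sigma>. Epos (kap M \<sigma> s) l) ` sigs M)"
proof (rule Max_eqI[symmetric])
  show "finite ((\<lambda>\<sigma>. Epos (kap M \<sigma> s) l) ` sigs M)" using sigs_fin[OF M] by simp
  show "\<And>y. y \<in> (\<lambda>\<sigma>. Epos (kap M \<sigma> s) l) ` sigs M \<Longrightarrow> y \<le> W M l s"
    using kap_le_W[OF M sigs_valid s] by auto
  show "W M l s \<in> (\<lambda>\<sigma>. Epos (kap M \<sigma> s) l) ` sigs M"
    using kap_greedy[OF M s, of l] gsig_in[OF M, of l] by force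
qed


section \<open>Choosing the price and the mixture\<close>

definition Pgt :: "real pmf \<Rightarrow> real \<Rightarrow> real" where
  "Pgt K l = E K (\<lambda>x. if l < x then 1 else 0)"

definition Pge :: "real pmf \<Rightarrow> real \<Rightarrow> real" where
  "Pge K l = E K (\<lambda>x. if l \<le> x then 1 else 0)"

lemma Pgt_le_Pge: "finite (set_pmf K) \<Longrightarrow> Pgt K l \<le> Pge K l"
  unfolding Pgt_def Pge_def by (intro E_mono) auto

lemma Epos_shift_right:
  assumes f: "finite (set_pmf K)" and h0: "0 \<le> h" and h: "\<And>x. x \<in> set_pmf K \<Longrightarrow> x \<le> l \<or> l + h \<le> x"
  shows "Epos K (l + h) = Epos K l - h * Pgt K l"
proof -
  have "Epos K (l + h) = E K (\<lambda>x. max 0 (x - l) - h * (if l < x then 1 else 0))"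
    unfolding Epos_def
  proof (rule E_cong)
    fix x assume "x \<in> set_pmf K"
    then have "x \<le> l \<or> l + h \<le> x" by (rule h)
    then show "max 0 (x - (l + h)) = max 0 (x - l) - h * (if l < x then 1 else 0)"
      using h0 by (cases "l < x") auto
  qed
  also have "\<dots> = Epos K l - h * Pgt K l" unfolding Epos_def Pgt_def using f by (simp add: E_diff)
  finally show ?thesis .
qed

lemma Epos_shift_left:
  assumes f: "finite (set_pmf K)" and h0: "0 \<le> h" and h: "\<And>x. x \<in> set_pmf K \<Longrightarrow> l \<le> x \<or> x \<le> l - h"
  shows "Epos K (l - h) = Epos K l + h * Pge K l"
proof -
  have "Epos K (l - h) = E K (\<lambda>x. max 0 (x - l) + h * (if l \<le> x then 1 else 0))"
    unfolding Epos_def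
  proof (rule E_cong)
    fix x assume "x \<in> set_pmf K"
    then have "l \<le> x \<or> x \<le> l - h" by (rule h)
    then show "max 0 (x - (l - h)) = max 0 (x - l) + h * (if l \<le> x then 1 else 0)"
      using h0 by (cases "l \<le> x") auto
  qed
  also have "\<dots> = Epos K l + h * Pge K l" unfolding Epos_def Pge_def using f by (simp add: E_add)
  finally show ?thesis .
qed

lemma Epos_lip: "finite (set_pmf K) \<Longrightarrow> 0 \<le> h \<Longrightarrow> Epos K (l - h) \<le> Epos K l + h"
proof -
  assume f: "finite (set_pmf K)" and h: "0 \<le> h"
  have "Epos K (l - h) \<le> E K (\<lambda>x. max 0 (x - l) + h)"
    unfolding Epos_def using f h by (intro E_mono) auto
  also have "\<dots> = Epos K l + h" unfolding Epos_def using f by (simp add: E_add)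
  finally show ?thesis .
qed

lemma Epos_below:
  assumes f: "finite (set_pmf K)" and h: "\<And>x. x \<in> set_pmf K \<Longrightarrow> L \<le> x" and l: "l \<le> L"
  shows "Epos K l = Epos K L + (L - l)"
proof -
  have "Epos K l = E K (\<lambda>x. max 0 (x - L) + (L - l))"
    unfolding Epos_def by (rule E_cong) (use h l in force)
  also have "\<dots> = Epos K L + (L - l)" unfolding Epos_def using f by (simp add: E_add)
  finally show ?thesis .
qed

lemma cont_Max:
  fixes f :: "'x \<Rightarrow> real \<Rightarrow> real"
  assumes "finite P" "P \<noteq> {}" "\<And>\<sigma>. \<sigma> \<in> P \<Longrightarrow> continuous_on A (f \<sigma>)"
  shows "continuous_on A (\<lambda>l. Max ((\<lambda>\<sigma>. f \<sigma> l) ` P))"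
  using assms
proof (induction P rule: finite_ne_induct)
  case (singleton x)
  then show ?case by simp
next
  case (insert x F)
  have "(\<lambda>l. Max ((\<lambda>\<sigma>. f \<sigma> l) ` insert x F)) = (\<lambda>l. max (f x l) (Max ((\<lambda>\<sigma>. f \<sigma> l) ` F)))"
    using insert by (intro ext) (simp add: Max_insert)
  then show ?case using insert by (simp add: continuous_on_max)
qed

lemma choose:
  fixes K :: "'x \<Rightarrow> real pmf"
  assumes P: "finite P" "P \<noteq> {}" and fK: "\<And>\<sigma>. \<sigma> \<in> P \<Longrightarrow> finite (set_pmf (K \<sigma>))"
    and q: "0 \<le> q" "q \<le> 1"
  shows "\<exists>l \<sigma>1 \<sigma>2 \<alpha>. \<sigma>1 \<in> P \<and> \<sigma>2 \<in> P \<and> 0 \<le> \<alpha> \<and> \<alpha> \<le> 1 \<and>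
     (\<forall>\<sigma>\<in>P. Epos (K \<sigma>) l \<le> Epos (K \<sigma>1) l) \<and> Epos (K \<sigma>2) l = Epos (K \<sigma>1) l \<and>
     Pgt (mixp \<alpha> (K \<sigma>1) (K \<sigma>2)) l \<le> q \<and> q \<le> Pge (mixp \<alpha> (K \<sigma>1) (K \<sigma>2)) l"
proof -
  define Wm where "Wm l = Max ((\<lambda>\<sigma>. Epos (K \<sigma>) l) ` P)" for l
  define phi where "phi l = l * q + Wm l" for l
  define U where "U = (\<Union>\<sigma>\<in>P. set_pmf (K \<sigma>))"
  have finU: "finite U" unfolding U_def using P fK by auto
  obtain \<sigma>0 where \<sigma>0: "\<sigma>0 \<in> P" using P by blast
  obtain u0 where u0: "u0 \<in> set_pmf (K \<sigma>0)" by (meson ex_in_conv set_pmf_not_empty)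
  have neU: "U \<noteq> {}" unfolding U_def using \<sigma>0 u0 by blast
  define Lo where "Lo = Min U"
  define Hi where "Hi = Max U"
  have LoU: "\<And>x. x \<in> U \<Longrightarrow> Lo \<le> x" unfolding Lo_def using finU by simp
  have HiU: "\<And>x. x \<in> U \<Longrightarrow> x \<le> Hi" unfolding Hi_def using finU by simp
  have LoHi: "Lo \<le> Hi" using LoU HiU neU by (meson ex_in_conv order.trans)
  have finimg: "\<And>l. finite ((\<lambda>\<sigma>. Epos (K \<sigma>) l) ` P)" using P by simp
  have neimg: "\<And>l. (\<lambda>\<sigma>. Epos (K \<sigma>) l) ` P \<noteq> {}" using P by simp
  have Wm_ge: "\<And>\<sigma> l. \<sigma> \<in> P \<Longrightarrow> Epos (K \<sigma>) l \<le> Wm l"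
    unfolding Wm_def using finimg by (intro Max_ge) auto
  have Wm_in: "\<And>l. \<exists>\<sigma>\<in>P. Wm l = Epos (K \<sigma>) l"
  proof -
    fix l
    have "Wm l \<in> (\<lambda>\<sigma>. Epos (K \<sigma>) l) ` P" unfolding Wm_def by (rule Max_in[OF finimg neimg])
    then show "\<exists>\<sigma>\<in>P. Wm l = Epos (K \<sigma>) l" by blast
  qed
  have Wm_lt: "Wm l < b" if hb: "\<And>\<sigma>. \<sigma> \<in> P \<Longrightarrow> Epos (K \<sigma>) l < b" for l b
  proof -
    obtain \<sigma> where "\<sigma> \<in> P" "Wm l = Epos (K \<sigma>) l" using Wm_in[of l] by blast
    then show ?thesis using hb[of \<sigma>] by simp
  qed
  have cphi: "continuous_on {Lo..Hi} phi"
  proof -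
    have "continuous_on {Lo..Hi} Wm" unfolding Wm_def
      by (rule cont_Max[OF P]) (rule Epos_cont[OF fK])
    then show ?thesis unfolding phi_def by (intro continuous_intros)
  qed
  have "\<exists>x\<in>{Lo..Hi}. \<forall>y\<in>{Lo..Hi}. phi x \<le> phi y"
    by (rule continuous_attains_inf[OF compact_Icc _ cphi]) (use LoHi in simp)
  then obtain l0 where l0: "l0 \<in> {Lo..Hi}" "\<And>y. y \<in> {Lo..Hi} \<Longrightarrow> phi l0 \<le> phi y" by blast
  have pLo: "phi l0 \<le> phi Lo" using l0(2)[of Lo] LoHi by simp
  have pHi: "phi l0 \<le> phi Hi" using l0(2)[of Hi] LoHi by simp
  have glob: "phi l0 \<le> phi y" for y
  proof (cases "y < Lo")
    case True
    have "Wm y = Wm Lo + (Lo - y)"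
    proof -
      have "(\<lambda>\<sigma>. Epos (K \<sigma>) y) ` P = (\<lambda>\<sigma>. Epos (K \<sigma>) Lo + (Lo - y)) ` P"
      proof (rule image_cong[OF refl])
        fix \<sigma> assume s: "\<sigma> \<in> P"
        have "\<And>x. x \<in> set_pmf (K \<sigma>) \<Longrightarrow> Lo \<le> x"
        proof -
          fix x assume "x \<in> set_pmf (K \<sigma>)"
          then have "x \<in> U" unfolding U_def using s by blast
          then show "Lo \<le> x" by (rule LoU)
        qed
        then show "Epos (K \<sigma>) y = Epos (K \<sigma>) Lo + (Lo - y)"
          using Epos_below[OF fK[OF s], of Lo y] True by simp
      qed
      then show ?thesis unfolding Wm_def using Max_add_commute[OF P, of "\<lambda>\<sigma>. Epos (K \<sigma>) Lo" "Lo - y"] by simp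
    qed
    then have "phi y - phi Lo = (Lo - y) * (1 - q)" unfolding phi_def by (simp add: algebra_simps)
    moreover have "0 \<le> (Lo - y) * (1 - q)" using True q by simp
    ultimately show ?thesis using pLo by linarith
  next
    case False
    show ?thesis
    proof (cases "y \<le> Hi")
      case True
      then show ?thesis using l0 False by simp
    next
      case False
      have z: "Wm l = 0" if hl: "Hi \<le> l" for l
      proof -
        have "Epos (K \<sigma>) l = 0" if s: "\<sigma> \<in> P" for \<sigma>
        proof (rule Epos_zero)
          fix x assume "x \<in> set_pmf (K \<sigma>)"
          then have "x \<in> U" unfolding U_def using s by blast
          then show "x \<le> l" using HiU[of x] hl by simp
        qed
        moreover obtain \<sigma> where "\<sigma> \<in> P" "Wm l = Epos (K \<sigma>) l" using Wm_in[of l] by blast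
        ultimately show "Wm l = 0" by simp
      qed
      have "Hi * q \<le> y * q" using False q by (intro mult_right_mono) auto
      then have "phi Hi \<le> phi y" unfolding phi_def using z[of Hi] z[of y] False by simp
      then show ?thesis using pHi by simp
    qed
  qed
  define Opt where "Opt = {\<sigma>\<in>P. Epos (K \<sigma>) l0 = Wm l0}"
  define D where "D = insert 1 ((\<lambda>x. \<bar>x - l0\<bar>) ` (U - {l0}))"
  have finD: "finite D" "D \<noteq> {}" unfolding D_def using finU by auto
  have Dpos: "\<And>d. d \<in> D \<Longrightarrow> 0 < d" unfolding D_def by auto
  define \<delta> where "\<delta> = Min D"
  have \<delta>pos: "0 < \<delta>" unfolding \<delta>_def using finD Dpos by simp
  have \<delta>U: "\<And>x. x \<in> U \<Longrightarrow> x \<noteq> l0 \<Longrightarrow> \<delta> \<le> \<bar>x - l0\<bar>" unfolding \<delta>_def D_def using finD(1)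
    by (intro Min_le) (auto simp: D_def)
  define \<epsilon> where "\<epsilon> = (if P - Opt = {} then 1 else Wm l0 - Max ((\<lambda>\<sigma>. Epos (K \<sigma>) l0) ` (P - Opt)))"
  have \<epsilon>pos: "0 < \<epsilon>"
  proof (cases "P - Opt = {}")
    case True then show ?thesis unfolding \<epsilon>_def by simp
  next
    case False
    have "Max ((\<lambda>\<sigma>. Epos (K \<sigma>) l0) ` (P - Opt)) \<in> (\<lambda>\<sigma>. Epos (K \<sigma>) l0) ` (P - Opt)"
      using False P by (intro Max_in) auto
    then obtain \<sigma> where s: "\<sigma> \<in> P - Opt" "Max ((\<lambda>\<sigma>. Epos (K \<sigma>) l0) ` (P - Opt)) = Epos (K \<sigma>) l0" by auto
    then have "Epos (K \<sigma>) l0 < Wm l0" using Wm_ge[of \<sigma> l0] unfolding Opt_def by auto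
    then show ?thesis unfolding \<epsilon>_def using False s by simp
  qed
  have nonopt: "\<And>\<sigma>. \<sigma> \<in> P \<Longrightarrow> \<sigma> \<notin> Opt \<Longrightarrow> Epos (K \<sigma>) l0 \<le> Wm l0 - \<epsilon>"
  proof -
    fix \<sigma> assume s: "\<sigma> \<in> P" "\<sigma> \<notin> Opt"
    then have ne: "P - Opt \<noteq> {}" by blast
    have "Epos (K \<sigma>) l0 \<le> Max ((\<lambda>\<sigma>. Epos (K \<sigma>) l0) ` (P - Opt))"
      using P s by (intro Max_ge) auto
    then show "Epos (K \<sigma>) l0 \<le> Wm l0 - \<epsilon>" unfolding \<epsilon>_def using ne by simp
  qed
  define h where "h = min \<delta> \<epsilon> / 2"
  have hpos: "0 < h" and hd: "h < \<delta>" and he: "h < \<epsilon>" unfolding h_def using \<delta>pos \<epsilon>pos by auto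
  have gap: "\<And>\<sigma> x. \<sigma> \<in> P \<Longrightarrow> x \<in> set_pmf (K \<sigma>) \<Longrightarrow> x = l0 \<or> l0 + h \<le> x \<or> x \<le> l0 - h"
  proof -
    fix \<sigma> x assume "\<sigma> \<in> P" "x \<in> set_pmf (K \<sigma>)"
    then have "x \<in> U" unfolding U_def by blast
    then have "x = l0 \<or> \<delta> \<le> \<bar>x - l0\<bar>" using \<delta>U by blast
    then show "x = l0 \<or> l0 + h \<le> x \<or> x \<le> l0 - h" using hd by (auto simp: abs_if split: if_splits)
  qed
  have c1: "\<exists>\<sigma>1\<in>Opt. Pgt (K \<sigma>1) l0 \<le> q"
  proof (rule ccontr)
    assume "\<not> ?thesis"
    then have big: "\<And>\<sigma>. \<sigma> \<in> Opt \<Longrightarrow> q < Pgt (K \<sigma>) l0" by force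
    have "Wm (l0 + h) < Wm l0 - h * q"
    proof (rule Wm_lt)
      fix \<sigma> assume s: "\<sigma> \<in> P"
      show "Epos (K \<sigma>) (l0 + h) < Wm l0 - h * q"
      proof (cases "\<sigma> \<in> Opt")
        case True
        have "Epos (K \<sigma>) (l0 + h) = Epos (K \<sigma>) l0 - h * Pgt (K \<sigma>) l0"
          by (rule Epos_shift_right[OF fK[OF s] less_imp_le[OF hpos]]) (use gap[OF s] in force)
        also have "\<dots> < Wm l0 - h * q"
          using True big[OF True] hpos unfolding Opt_def by simp
        finally show ?thesis .
      next
        case False
        have "Epos (K \<sigma>) (l0 + h) \<le> Epos (K \<sigma>) l0" using hpos by (intro Epos_anti[OF fK[OF s]]) simp
        also have "\<dots> \<le> Wm l0 - \<epsilon>" by (rule nonopt[OF s False])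
        also have "\<dots> < Wm l0 - h * q" using he q hpos mult_left_le[of q h] by linarith
        finally show ?thesis .
      qed
    qed
    then have "phi (l0 + h) < phi l0" unfolding phi_def by (simp add: algebra_simps)
    then show False using glob[of "l0 + h"] by simp
  qed
  have c2: "\<exists>\<sigma>2\<in>Opt. q \<le> Pge (K \<sigma>2) l0"
  proof (rule ccontr)
    assume "\<not> ?thesis"
    then have small: "\<And>\<sigma>. \<sigma> \<in> Opt \<Longrightarrow> Pge (K \<sigma>) l0 < q" by force
    have "Wm (l0 - h) < Wm l0 + h * q"
    proof (rule Wm_lt)
      fix \<sigma> assume s: "\<sigma> \<in> P"
      show "Epos (K \<sigma>) (l0 - h) < Wm l0 + h * q"
      proof (cases "\<sigma> \<in> Opt")
        case True
        have "Epos (K \<sigma>) (l0 - h) = Epos (K \<sigma>) l0 + h * Pge (K \<sigma>) l0"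
          by (rule Epos_shift_left[OF fK[OF s] less_imp_le[OF hpos]]) (use gap[OF s] in force)
        also have "\<dots> < Wm l0 + h * q"
          using True small[OF True] hpos unfolding Opt_def by simp
        finally show ?thesis .
      next
        case False
        have "Epos (K \<sigma>) (l0 - h) \<le> Epos (K \<sigma>) l0 + h" using hpos by (intro Epos_lip[OF fK[OF s]]) simp
        also have "\<dots> \<le> Wm l0 - \<epsilon> + h" using nonopt[OF s False] by simp
        also have "\<dots> < Wm l0 + h * q" using he q hpos mult_nonneg_nonneg[of h q] by linarith
        finally show ?thesis .
      qed
    qed
    then have "phi (l0 - h) < phi l0" unfolding phi_def by (simp add: algebra_simps)
    then show False using glob[of "l0 - h"] by simp
  qed
  obtain \<sigma>1 where s1: "\<sigma>1 \<in> Opt" "Pgt (K \<sigma>1) l0 \<le> q" using c1 by blast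
  obtain \<sigma>2 where s2: "\<sigma>2 \<in> Opt" "q \<le> Pge (K \<sigma>2) l0" using c2 by blast
  have P1: "\<sigma>1 \<in> P" and P2: "\<sigma>2 \<in> P" using s1 s2 unfolding Opt_def by auto
  note f1 = fK[OF P1] and f2 = fK[OF P2]
  have maxi: "\<forall>\<sigma>\<in>P. Epos (K \<sigma>) l0 \<le> Epos (K \<sigma>1) l0" using Wm_ge s1 unfolding Opt_def by auto
  have eq12: "Epos (K \<sigma>2) l0 = Epos (K \<sigma>1) l0" using s1 s2 unfolding Opt_def by auto
  show ?thesis
  proof (cases "q \<le> Pge (K \<sigma>1) l0")
    case True
    have m1: "\<And>f. E (mixp 1 (K \<sigma>1) (K \<sigma>2)) f = E (K \<sigma>1) f" using E_mixp[OF f1 f2, of 1] by simp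
    show ?thesis
      by (rule exI[of _ l0], rule exI[of _ \<sigma>1], rule exI[of _ \<sigma>2], rule exI[of _ 1])
         (use P1 P2 maxi eq12 s1 True in \<open>simp add: Pgt_def Pge_def m1\<close>)
  next
    case False
    define \<alpha> where "\<alpha> = (Pge (K \<sigma>2) l0 - q) / (Pge (K \<sigma>2) l0 - Pge (K \<sigma>1) l0)"
    have den: "0 < Pge (K \<sigma>2) l0 - Pge (K \<sigma>1) l0" using False s2 by simp
    have a0: "0 \<le> \<alpha>" unfolding \<alpha>_def using den s2 by simp
    have a1: "\<alpha> \<le> 1" unfolding \<alpha>_def using den False by (simp add: divide_le_eq_1)
    have fm: "finite (set_pmf (mixp \<alpha> (K \<sigma>1) (K \<sigma>2)))" by (rule finite_mixp[OF f1 f2])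
    have "Pge (mixp \<alpha> (K \<sigma>1) (K \<sigma>2)) l0 = \<alpha> * Pge (K \<sigma>1) l0 + (1 - \<alpha>) * Pge (K \<sigma>2) l0"
      unfolding Pge_def by (rule E_mixp[OF f1 f2 a0 a1])
    also have "\<dots> = q"
    proof -
      have "\<alpha> * (Pge (K \<sigma>2) l0 - Pge (K \<sigma>1) l0) = Pge (K \<sigma>2) l0 - q"
        unfolding \<alpha>_def using den by simp
      then show ?thesis by (simp add: algebra_simps)
    qed
    finally have eqq: "Pge (mixp \<alpha> (K \<sigma>1) (K \<sigma>2)) l0 = q" .
    have "Pgt (mixp \<alpha> (K \<sigma>1) (K \<sigma>2)) l0 \<le> q" using Pgt_le_Pge[OF fm, of l0] eqq by simp
    then show ?thesis using P1 P2 maxi eq12 a0 a1 eqq by blast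
  qed
qed


definition Dm :: "real pmf \<Rightarrow> real measure" where
  "Dm K = distr (measure_pmf K) borel (\<lambda>x. x)"

lemma Dm_meas: "(\<lambda>x. x) \<in> measurable (measure_pmf K) borel" by simp

lemma Dm_prob: "prob_space (Dm K)"
  unfolding Dm_def by (rule prob_space.prob_space_distr[OF prob_space_measure_pmf Dm_meas])

lemma Dm_sets: "sets (Dm K) = sets borel"
  unfolding Dm_def by simp

lemma Dm_integral: "f \<in> borel_measurable borel \<Longrightarrow> integral\<^sup>L (Dm K) f = E K f"
  unfolding Dm_def by (rule integral_distr[OF Dm_meas])

lemma Dm_integrable:
  fixes f :: "real \<Rightarrow> 'b::{banach, second_countable_topology}"
  shows "finite (set_pmf K) \<Longrightarrow> f \<in> borel_measurable borel \<Longrightarrow> integrable (Dm K) f"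
proof -
  assume f: "finite (set_pmf K)" and m: "f \<in> borel_measurable borel"
  have "integrable (measure_pmf K) (\<lambda>x. f x)" by (rule integrable_measure_pmf_finite[OF f])
  then show ?thesis unfolding Dm_def using integrable_distr_eq[OF Dm_meas m] by simp
qed

lemma integrable_meas:
  fixes f :: "real \<Rightarrow> 'b::{banach, second_countable_topology}"
  shows "integrable (Dm K) f \<Longrightarrow> f \<in> borel_measurable borel"
proof -
  assume "integrable (Dm K) f"
  then have "f \<in> borel_measurable (Dm K)" by (rule borel_measurable_integrable)
  moreover have "borel_measurable (Dm K) = (borel_measurable borel :: (real \<Rightarrow> 'b::{banach, second_countable_topology}) set)"
    by (rule measurable_cong_sets[OF Dm_sets refl])
  ultimately show ?thesis by simp
qed

lemma E_pos_pt:
  assumes f: "finite (set_pmf K)" and nn: "\<And>x. x \<in> set_pmf K \<Longrightarrow> 0 \<le> g x"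
    and y: "y \<in> set_pmf K" "0 < g y"
  shows "0 < E K g"
proof -
  have "E K g = (\<Sum>x\<in>set_pmf K. g x * pmf K x)" by (rule integral_measure_pmf_real[OF f]) auto
  also have "0 < \<dots>"
  proof (rule sum_pos2[OF f y(1)])
    show "0 < g y * pmf K y" using y by (simp add: pmf_positive)
    show "\<And>i. i \<in> set_pmf K \<Longrightarrow> 0 \<le> g i * pmf K i" using nn by simp
  qed
  finally show ?thesis .
qed

lemma E_zero_pt:
  assumes f: "finite (set_pmf K)" and nn: "\<And>x. x \<in> set_pmf K \<Longrightarrow> 0 \<le> g x"
    and z: "E K g \<le> 0" and y: "y \<in> set_pmf K"
  shows "g y \<le> 0"
  using E_pos_pt[OF f nn y] z by force

section \<open>Quantiles and the function F\<close>

lemma quantile_ex: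
  assumes f: "finite (set_pmf K)" and q: "0 \<le> q" "q \<le> 1"
  shows "\<exists>l. Pgt K l \<le> q \<and> q \<le> Pge K l"
proof (cases "q = 0")
  case True
  have "Pgt K (Max (set_pmf K)) = E K (\<lambda>x. 0)" unfolding Pgt_def
    by (rule E_cong) (use f in \<open>auto dest: Max_ge[OF f]\<close>)
  moreover have "0 \<le> Pge K (Max (set_pmf K))" unfolding Pge_def by (rule E_nonneg) simp
  ultimately have "Pgt K (Max (set_pmf K)) \<le> q \<and> q \<le> Pge K (Max (set_pmf K))" using True by simp
  then show ?thesis by blast
next
  case False
  then have qp: "0 < q" using q by simp
  define S where "S = {x \<in> set_pmf K. q \<le> Pge K x}"
  have finS: "finite S" unfolding S_def using f by simp
  have ne: "set_pmf K \<noteq> {}" by (rule set_pmf_not_empty)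
  have mn: "Min (set_pmf K) \<in> S"
  proof -
    have "Pge K (Min (set_pmf K)) = E K (\<lambda>x. 1)" unfolding Pge_def
      by (rule E_cong) (use f in auto)
    then show ?thesis unfolding S_def using Min_in[OF f ne] q by simp
  qed
  then have neS: "S \<noteq> {}" by blast
  define l where "l = Max S"
  have lS: "l \<in> S" unfolding l_def using finS neS by simp
  have ge: "q \<le> Pge K l" using lS unfolding S_def by simp
  have gt: "Pgt K l \<le> q"
  proof (rule ccontr)
    assume "\<not> Pgt K l \<le> q"
    then have big: "q < Pgt K l" by simp
    define Y where "Y = {y \<in> set_pmf K. l < y}"
    have "Y \<noteq> {}"
    proof
      assume "Y = {}"
      then have "Pgt K l = E K (\<lambda>x. 0)" unfolding Pgt_def by (intro E_cong) (auto simp: Y_def)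
      then show False using big qp by simp
    qed
    moreover have finY: "finite Y" unfolding Y_def using f by simp
    ultimately have yY: "Min Y \<in> Y" by simp
    define y where "y = Min Y"
    have "Pge K y = Pgt K l" unfolding Pge_def Pgt_def
    proof (rule E_cong)
      fix z assume z: "z \<in> set_pmf K"
      have "y \<le> z" if "l < z" using z that finY unfolding y_def Y_def by (intro Min_le) auto
      moreover have "l < y" using yY unfolding y_def Y_def by simp
      ultimately show "(if y \<le> z then 1 else 0) = (if l < z then 1 else (0::real))" by auto
    qed
    then have "y \<in> S" using yY big unfolding S_def y_def Y_def by simp
    then have "y \<le> l" unfolding l_def using finS by simp
    moreover have "l < y" using yY unfolding y_def Y_def by simp
    ultimately show False by simp
  qed
  show ?thesis using ge gt by blast
qed

lemma top_weight_value:
  assumes f: "finite (set_pmf K)" and tw: "top_weight (Dm K) q w"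
    and l: "Pgt K l \<le> q" "q \<le> Pge K l"
  shows "integral\<^sup>L (Dm K) (\<lambda>x. x * w x) = l * q + Epos K l"
proof -
  have wm: "w \<in> borel_measurable borel" and w01: "\<And>x. 0 \<le> w x \<and> w x \<le> 1"
    and wq: "integral\<^sup>L (Dm K) w = q" and mono: "\<And>x y. x < y \<Longrightarrow> 0 < w x \<Longrightarrow> w y = 1"
    using tw unfolding top_weight_def by blast+
  have Ew: "E K w = q" using wq Dm_integral[OF wm] by simp
  have hi: "w x = 1" if x: "x \<in> set_pmf K" "l < x" for x
  proof (rule ccontr)
    assume "w x \<noteq> 1"
    then have wx: "w x < 1" using w01[of x] by simp
    have zero: "w y = 0" if "y < x" for y using mono[OF that] wx w01[of y] by force
    have "0 < E K (\<lambda>y. (if x \<le> y then 1 else 0) - w y)"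
    proof (rule E_pos_pt[OF f _ x(1)])
      show "\<And>y. y \<in> set_pmf K \<Longrightarrow> 0 \<le> (if x \<le> y then 1 else 0) - w y"
        using zero w01 by (simp add: not_le)
      show "0 < (if x \<le> x then 1 else 0) - w x" using wx by simp
    qed
    then have "E K w < Pge K x" unfolding Pge_def using f by (simp add: E_diff)
    also have "Pge K x \<le> Pgt K l" unfolding Pge_def Pgt_def using f x(2) by (intro E_mono) auto
    finally show False using Ew l by simp
  qed
  have lo: "w x = 0" if x: "x \<in> set_pmf K" "x < l" for x
  proof (rule ccontr)
    assume "w x \<noteq> 0"
    then have wx: "0 < w x" using w01[of x] by simp
    have one: "w y = 1" if "x < y" for y using mono[OF that wx] .
    have "0 < E K (\<lambda>y. w y - (if l \<le> y then 1 else 0))"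
    proof (rule E_pos_pt[OF f _ x(1)])
      show "\<And>y. y \<in> set_pmf K \<Longrightarrow> 0 \<le> w y - (if l \<le> y then 1 else 0)"
        using one w01 x(2) by force
      show "0 < w x - (if l \<le> x then 1 else 0)" using wx x(2) by simp
    qed
    then have "Pge K l < E K w" unfolding Pge_def using f by (simp add: E_diff)
    then show False using Ew l by simp
  qed
  have "integral\<^sup>L (Dm K) (\<lambda>x. x * w x) = E K (\<lambda>x. x * w x)"
    by (rule Dm_integral) (use wm in measurable)
  also have "\<dots> = E K (\<lambda>x. l * w x + max 0 (x - l))"
  proof (rule E_cong)
    fix x assume x: "x \<in> set_pmf K"
    consider "l < x" | "x < l" | "x = l" by fastforce
    then show "x * w x = l * w x + max 0 (x - l)"
    proof cases
      case 1 then show ?thesis using hi[OF x 1] by simp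
    next
      case 2 then show ?thesis using lo[OF x 2] by simp
    qed simp
  qed
  also have "\<dots> = l * q + Epos K l" using f Ew by (simp add: E_add Epos_def)
  finally show ?thesis .
qed

lemma qF:
  assumes f: "finite (set_pmf K)" and q: "0 \<le> q" "q \<le> 1" and l: "Pgt K l \<le> q" "q \<le> Pge K l"
  shows "q * F_top (Dm K) q = l * q + Epos K l"
proof (cases "q = 0")
  case True
  have "Epos K l = 0"
  proof (rule Epos_zero)
    fix x assume x: "x \<in> set_pmf K"
    have "(if l < x then 1 else 0) \<le> (0::real)"
      by (rule E_zero_pt[OF f _ _ x]) (use l True in \<open>auto simp: Pgt_def\<close>)
    then show "x \<le> l" by (auto split: if_splits)
  qed
  then show ?thesis using True by simp
next
  case False
  then have qp: "0 < q" using q by simp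
  define pl where "pl = pmf K l"
  have Pdiff: "Pge K l - Pgt K l = pl"
  proof -
    have "Pge K l - Pgt K l = E K (\<lambda>x. if x = l then 1 else 0)"
      unfolding Pge_def Pgt_def using f by (subst E_diff[symmetric]) (auto intro!: E_cong)
    also have "\<dots> = pl" unfolding pl_def
      by (subst integral_measure_pmf_real[of "{l}"]) (auto split: if_splits)
    finally show ?thesis .
  qed
  define \<theta> where "\<theta> = (if pl = 0 then 0 else (q - Pgt K l) / pl)"
  have pl0: "0 \<le> pl" unfolding pl_def by simp
  have th: "0 \<le> \<theta>" "\<theta> \<le> 1" unfolding \<theta>_def using l Pdiff pl0 by (auto simp: divide_le_eq_1)
  have thq: "Pgt K l + \<theta> * pl = q" unfolding \<theta>_def using l Pdiff by auto
  define w0 where "w0 x = indicator {l<..} x + \<theta> * indicator {l} x" for x :: real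
  have w0m: "w0 \<in> borel_measurable borel" unfolding w0_def by measurable
  have tw0: "top_weight (Dm K) q w0"
    unfolding top_weight_def
  proof (intro conjI allI impI)
    show "w0 \<in> borel_measurable borel" by (rule w0m)
    fix x
    show "0 \<le> w0 x" "w0 x \<le> 1" unfolding w0_def using th by (auto split: split_indicator)
  next
    have "integral\<^sup>L (Dm K) w0 = E K w0" by (rule Dm_integral[OF w0m])
    also have "\<dots> = E K (\<lambda>x. (if l < x then 1 else 0) + \<theta> * (if x = l then 1 else 0))"
      unfolding w0_def by (intro E_cong) (auto split: split_indicator)
    also have "\<dots> = Pgt K l + \<theta> * pl"
    proof -
      have "E K (\<lambda>x. if x = l then 1 else 0) = pl" unfolding pl_def
        by (subst integral_measure_pmf_real[of "{l}"]) (auto split: if_splits)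
      then show ?thesis using f by (simp add: E_add Pgt_def)
    qed
    finally show "integral\<^sup>L (Dm K) w0 = q" using thq by simp
  next
    fix x y :: real assume xy: "x < y" and p: "0 < w0 x"
    have "l \<le> x"
    proof (rule ccontr)
      assume "\<not> l \<le> x"
      then have "w0 x = 0" unfolding w0_def by (simp split: split_indicator)
      then show False using p by simp
    qed
    then have "l < y" using xy by simp
    then show "w0 y = 1" unfolding w0_def by (simp split: split_indicator)
  qed
  let ?P = "\<lambda>v. \<exists>w. top_weight (Dm K) q w \<and> v = integral\<^sup>L (Dm K) (\<lambda>x. x * w x)"
  have ex: "\<exists>v. ?P v" using tw0 by blast
  have "?P (SOME v. ?P v)" by (rule someI_ex[OF ex])
  then obtain w where w: "top_weight (Dm K) q w" and v: "(SOME v. ?P v) = integral\<^sup>L (Dm K) (\<lambda>x. x * w x)"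
    by blast
  have "(SOME v. ?P v) = l * q + Epos K l" using v top_weight_value[OF f w l] by simp
  then show ?thesis unfolding F_top_def using qp by simp
qed

lemma qF_bound:
  assumes f: "finite (set_pmf K)" and q: "0 \<le> q" "q \<le> 1"
  shows "q * F_top (Dm K) q \<le> E K (\<lambda>x. \<bar>x\<bar>)"
proof -
  obtain l where l: "Pgt K l \<le> q" "q \<le> Pge K l" using quantile_ex[OF f q] by blast
  have "q * F_top (Dm K) q = l * q + Epos K l" by (rule qF[OF f q l])
  also have "\<dots> \<le> E K (\<lambda>x. \<bar>x\<bar>)"
  proof (cases "0 \<le> l")
    case True
    have "l * q \<le> l * Pge K l" using True l by (simp add: mult_left_mono)
    moreover have "l * Pge K l + Epos K l = E K (\<lambda>x. if l \<le> x then x else 0)"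
    proof -
      have "l * Pge K l + Epos K l = E K (\<lambda>x. l * (if l \<le> x then 1 else 0) + max 0 (x - l))"
        unfolding Pge_def Epos_def using f by (simp add: E_add)
      also have "\<dots> = E K (\<lambda>x. if l \<le> x then x else 0)" by (rule E_cong) auto
      finally show ?thesis .
    qed
    moreover have "E K (\<lambda>x. if l \<le> x then x else 0) \<le> E K (\<lambda>x. \<bar>x\<bar>)"
      using f by (intro E_mono) auto
    ultimately show ?thesis by linarith
  next
    case False
    have "l * q \<le> l * Pgt K l" using False l by (simp add: mult_left_mono_neg)
    moreover have "l * Pgt K l + Epos K l = E K (\<lambda>x. if l < x then x else 0)"
    proof -
      have "l * Pgt K l + Epos K l = E K (\<lambda>x. l * (if l < x then 1 else 0) + max 0 (x - l))"
        unfolding Pgt_def Epos_def using f by (simp add: E_add)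
      also have "\<dots> = E K (\<lambda>x. if l < x then x else 0)" by (rule E_cong) auto
      finally show ?thesis .
    qed
    moreover have "E K (\<lambda>x. if l < x then x else 0) \<le> E K (\<lambda>x. \<bar>x\<bar>)"
      using f by (intro E_mono) auto
    ultimately show ?thesis by linarith
  qed
  finally show ?thesis .
qed


primrec dval :: "('n \<Rightarrow> real pmf) \<Rightarrow> 'n fo_alg \<Rightarrow> real" where
  "dval P FHalt = 0"
| "dval P (Probe i \<tau> ka kr) = E (P i) (\<lambda>x. if \<tau> \<le> x then x + dval P (ka x) else dval P (kr x))"

inductive sadm :: "'n set set \<Rightarrow> 'n set \<Rightarrow> 'n set \<Rightarrow> 'n fo_alg \<Rightarrow> bool" for F where
  sadm_halt: "sadm F S R FHalt"
| sadm_probe: "i \<notin> S \<union> R \<Longrightarrow> insert i S \<in> F \<Longrightarrow>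
   (\<forall>x. sadm F (insert i S) R (ka x)) \<Longrightarrow> (\<forall>x. sadm F S (insert i R) (kr x)) \<Longrightarrow>
   sadm F S R (Probe i \<tau> ka kr)"

lemma fo_sadm: "fo_adm F D S R t \<Longrightarrow> sadm F S R t"
  by (induction rule: fo_adm.induct) (auto intro: sadm.intros)

lemma fo_dval: "fo_adm F (\<lambda>i. Dm (P i)) S R t \<Longrightarrow> fo_val (\<lambda>i. Dm (P i)) t = dval P t"
proof (induction rule: fo_adm.induct)
  case (1 S R)
  then show ?case by simp
next
  case (2 i S R ka kr \<tau>)
  let ?f = "\<lambda>x. if \<tau> \<le> x then x + fo_val (\<lambda>i. Dm (P i)) (ka x) else fo_val (\<lambda>i. Dm (P i)) (kr x)"
  let ?g = "\<lambda>x. if \<tau> \<le> x then x + dval P (ka x) else dval P (kr x)"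
  have fg: "?f = ?g" using 2 by (intro ext) simp
  have "integrable (Dm (P i)) ?f" using 2 by simp
  then have m: "?f \<in> borel_measurable borel" by (rule integrable_meas)
  have "fo_val (\<lambda>i. Dm (P i)) (Probe i \<tau> ka kr) = integral\<^sup>L (Dm (P i)) ?f" by simp
  also have "\<dots> = E (P i) ?f" by (rule Dm_integral[OF m])
  also have "\<dots> = dval P (Probe i \<tau> ka kr)" using fg by simp
  finally show ?case .
qed

lemma dval_indep:
  fixes P :: "'n \<Rightarrow> real pmf"
  shows "sadm F S R t \<Longrightarrow> j \<in> S \<union> R \<Longrightarrow> dval (P(j := A)) t = dval (P(j := B)) t"
proof (induction arbitrary: rule: sadm.induct)
  case (sadm_halt S R)
  then show ?case by simp
next
  case (sadm_probe i S R ka kr \<tau>)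
  then have ij: "i \<noteq> j" by auto
  have j1: "j \<in> insert i S \<union> R" and j2: "j \<in> S \<union> insert i R" using sadm_probe.prems by auto
  have "\<And>x. dval (P(j := A)) (ka x) = dval (P(j := B)) (ka x)" using sadm_probe(3) j1 by blast
  moreover have "\<And>x. dval (P(j := A)) (kr x) = dval (P(j := B)) (kr x)" using sadm_probe(4) j2 by blast
  ultimately have e: "(\<lambda>x. if \<tau> \<le> x then x + dval (P(j := A)) (ka x) else dval (P(j := A)) (kr x)) =
     (\<lambda>x. if \<tau> \<le> x then x + dval (P(j := B)) (ka x) else dval (P(j := B)) (kr x))" by (intro ext) simp
  have "(P(j := A)) i = P i" "(P(j := B)) i = P i" using ij by auto
  then show ?case by (simp only: dval.simps e)
qed

lemma dval_lin:
  fixes P :: "'n \<Rightarrow> real pmf" and A B :: "real pmf"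
  assumes fin: "\<forall>i. finite (set_pmf (P i))" and fA: "finite (set_pmf A)" and fB: "finite (set_pmf B)"
    and a: "0 \<le> \<alpha>" "\<alpha> \<le> 1"
  shows "sadm F S R t \<Longrightarrow> j \<notin> S \<union> R \<Longrightarrow>
    dval (P(j := mixp \<alpha> A B)) t = \<alpha> * dval (P(j := A)) t + (1 - \<alpha>) * dval (P(j := B)) t"
proof (induction rule: sadm.induct)
  case (sadm_halt S R)
  then show ?case by simp
next
  case (sadm_probe i S R ka kr \<tau>)
  show ?case
  proof (cases "i = j")
    case True
    have kaX: "dval (P(j := X)) (ka x) = dval P (ka x)" for X x
      using dval_indep[where F=F and S="insert i S" and R=R and t="ka x" and j=j and P=P and A=X and B="P j"] sadm_probe True
      by simp
    have krX: "dval (P(j := X)) (kr x) = dval P (kr x)" for X x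
      using dval_indep[where F=F and S=S and R="insert i R" and t="kr x" and j=j and P=P and A=X and B="P j"] sadm_probe True
      by simp
    let ?f = "\<lambda>x. if \<tau> \<le> x then x + dval P (ka x) else dval P (kr x)"
    have eqX: "(\<lambda>x. if \<tau> \<le> x then x + dval (P(j := X)) (ka x) else dval (P(j := X)) (kr x))
       = (\<lambda>x. if \<tau> \<le> x then x + dval P (ka x) else dval P (kr x))" for X
      using kaX[of X] krX[of X] by (intro ext) simp
    have "dval (P(j := mixp \<alpha> A B)) (Probe i \<tau> ka kr) = E (mixp \<alpha> A B) ?f"
      using True eqX[of "mixp \<alpha> A B"] by simp
    also have "\<dots> = \<alpha> * E A ?f + (1 - \<alpha>) * E B ?f" by (rule E_mixp[OF fA fB a])
    also have "E A ?f = dval (P(j := A)) (Probe i \<tau> ka kr)" using True eqX[of A] by simp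
    also have "E B ?f = dval (P(j := B)) (Probe i \<tau> ka kr)" using True eqX[of B] by simp
    finally show ?thesis .
  next
    case False
    have IHa: "\<And>x. dval (P(j := mixp \<alpha> A B)) (ka x) = \<alpha> * dval (P(j := A)) (ka x) + (1 - \<alpha>) * dval (P(j := B)) (ka x)"
      using sadm_probe(3) sadm_probe.prems False by blast
    have IHr: "\<And>x. dval (P(j := mixp \<alpha> A B)) (kr x) = \<alpha> * dval (P(j := A)) (kr x) + (1 - \<alpha>) * dval (P(j := B)) (kr x)"
      using sadm_probe(4) sadm_probe.prems False by blast
    let ?fA = "\<lambda>x. if \<tau> \<le> x then x + dval (P(j := A)) (ka x) else dval (P(j := A)) (kr x)"
    let ?fB = "\<lambda>x. if \<tau> \<le> x then x + dval (P(j := B)) (ka x) else dval (P(j := B)) (kr x)"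
    have "dval (P(j := mixp \<alpha> A B)) (Probe i \<tau> ka kr) = E (P i) (\<lambda>x. \<alpha> * ?fA x + (1 - \<alpha>) * ?fB x)"
      using False IHa IHr by (simp, intro E_cong) (simp add: algebra_simps)
    also have "\<dots> = \<alpha> * E (P i) ?fA + (1 - \<alpha>) * E (P i) ?fB"
      using fin by (simp add: E_add)
    also have "\<dots> = \<alpha> * dval (P(j := A)) (Probe i \<tau> ka kr) + (1 - \<alpha>) * dval (P(j := B)) (Probe i \<tau> ka kr)"
      using False by simp
    finally show ?thesis .
  qed
qed


section \<open>Simulating a free-order algorithm by a committing policy\<close>

lemma seg_lemma:
  fixes M :: "'n \<Rightarrow> ('s,'a) mdp" and c :: "'n \<Rightarrow> 's" and \<pi> :: "'n \<Rightarrow> 's \<Rightarrow> 'a pmf"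
    and A B :: "real \<Rightarrow> real"
  assumes Mi: "is_mdp (M i)" and Vi: "valid_sig (M i) (\<sigma>i)"
    and pi: "\<And>s. \<pi> i s = return_pmf (\<sigma>i s)"
    and accH: "\<And>x s. s \<in> m_term (M i) \<Longrightarrow> \<exists>t. valid_pol F M (c(i := s)) t \<and> commits \<pi> (c(i := s)) t \<and>
         Vz + m_val (M i) s + A x \<le> util M (c(i := s)) t"
    and rejH: "\<And>x s. s \<in> m_states (M i) \<Longrightarrow> \<exists>t. valid_pol F M (c(i := s)) t \<and> commits \<pi> (c(i := s)) t \<and>
         Vz + B x \<le> util M (c(i := s)) t"
  shows "\<exists>t. valid_pol F M (c(i := m_root (M i))) t \<and> commits \<pi> (c(i := m_root (M i))) t \<and>
     Vz + E (kap (M i) \<sigma>i (m_root (M i))) (\<lambda>x. if \<tau> \<le> x then x + A x else B x) \<le> util M (c(i := m_root (M i))) t"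
proof -
  let ?Mi = "M i"
  let ?k = "kap ?Mi \<sigma>i"
  let ?g = "gg ?Mi \<sigma>i"
  let ?T = "\<lambda>s. m_trans ?Mi s (\<sigma>i s)"
  define fv where "fv x = (if \<tau> \<le> x then x + A x else B x)" for x
  define acc where "acc x s = (SOME t. valid_pol F M (c(i := s)) t \<and> commits \<pi> (c(i := s)) t \<and>
         Vz + m_val ?Mi s + A x \<le> util M (c(i := s)) t)" for x s
  define rej where "rej x s = (SOME t. valid_pol F M (c(i := s)) t \<and> commits \<pi> (c(i := s)) t \<and>
         Vz + B x \<le> util M (c(i := s)) t)" for x s
  have acc: "valid_pol F M (c(i := s)) (acc x s) \<and> commits \<pi> (c(i := s)) (acc x s) \<and>
         Vz + m_val ?Mi s + A x \<le> util M (c(i := s)) (acc x s)" if "s \<in> m_term ?Mi" for x s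
    unfolding acc_def by (rule someI_ex[OF accH[OF that]])
  have rej: "valid_pol F M (c(i := s)) (rej x s) \<and> commits \<pi> (c(i := s)) (rej x s) \<and>
         Vz + B x \<le> util M (c(i := s)) (rej x s)" if "s \<in> m_states ?Mi" for x s
    unfolding rej_def by (rule someI_ex[OF rejH[OF that]])
  define xs where "xs s m = (SOME x. x \<in> set_pmf (map_pmf (min m) (?k s)) \<and>
       (\<forall>y\<in>set_pmf (map_pmf (min m) (?k s)). B y \<le> B x))" for s m
  have xs: "xs s m \<in> set_pmf (map_pmf (min m) (?k s)) \<and> (\<forall>y\<in>set_pmf (map_pmf (min m) (?k s)). B y \<le> B (xs s m))"
    for s m
  proof -
    let ?Z = "set_pmf (map_pmf (min m) (?k s))"
    have fZ: "finite ?Z" using kap_fin[OF Mi Vi] by simp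
    have nZ: "?Z \<noteq> {}" by (rule set_pmf_not_empty)
    have "Max (B ` ?Z) \<in> B ` ?Z" using fZ nZ by (intro Max_in) auto
    then obtain x where x0: "Max (B ` ?Z) = B x" "x \<in> ?Z" by (rule imageE)
    then have x: "x \<in> ?Z" "B x = Max (B ` ?Z)" by simp_all
    have "\<forall>y\<in>?Z. B y \<le> B x"
    proof
      fix y assume "y \<in> ?Z"
      then have "B y \<le> Max (B ` ?Z)" using fZ by (intro Max_ge) auto
      then show "B y \<le> B x" using x(2) by simp
    qed
    then have "\<exists>x. x \<in> ?Z \<and> (\<forall>y\<in>?Z. B y \<le> B x)" using x(1) by blast
    from someI_ex[OF this] show ?thesis unfolding xs_def .
  qed
  define Gseg where "Gseg f s = (\<lambda>m. if s \<in> m_term ?Mi then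
        (if \<tau> \<le> min m (m_val ?Mi s) then acc (min m (m_val ?Mi s)) s else rej (min m (m_val ?Mi s)) s)
      else if s \<notin> m_states ?Mi then Halt {}
      else if ?g s < \<tau> then rej (xs s m) s
      else Adv i (return_pmf (\<sigma>i s)) (\<lambda>a s'. if s' \<in> set_pmf (?T s) then f s' (min m (?g s)) else Halt {}))"
    for f :: "'s \<Rightarrow> real \<Rightarrow> ('n, 'a, 's) policy" and s
  define seg where "seg = fixp ?Mi Gseg (\<lambda>_ _. Halt {})"
  have locG: "loc ?Mi Gseg"
    unfolding loc_def
  proof (intro allI impI)
    fix f g :: "'s \<Rightarrow> real \<Rightarrow> ('n, 'a, 's) policy" and s
    assume h: "\<forall>s'. (s, s') \<in> edges ?Mi \<longrightarrow> f s' = g s'"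
    show "Gseg f s = Gseg g s"
    proof (cases "s \<in> m_states ?Mi \<and> s \<notin> m_term ?Mi")
      case True
      have "(\<lambda>a s'. if s' \<in> set_pmf (?T s) then f s' (min m (?g s)) else Halt {}) =
            (\<lambda>a s'. if s' \<in> set_pmf (?T s) then g s' (min m (?g s)) else Halt {})" for m
        using h sig_edge[OF Mi Vi] True by (intro ext) auto
      note eqs = this
      show ?thesis unfolding Gseg_def by (rule ext) (simp only: eqs)
    next
      case False
      then show ?thesis unfolding Gseg_def by auto
    qed
  qed
  have seg_eq: "seg s m = Gseg seg s m" for s m
    unfolding seg_def using fixp_eq[OF Mi locG] by metis
  have claim: "\<forall>m. \<tau> \<le> m \<longrightarrow> valid_pol F M (c(i := s)) (seg s m) \<and> commits \<pi> (c(i := s)) (seg s m) \<and>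
      Vz + E (?k s) (\<lambda>x. fv (min m x)) + Epos (?k s) m \<le> util M (c(i := s)) (seg s m)"
    if "s \<in> m_states ?Mi" for s
    using that
  proof (induction s rule: rk_induct[OF Mi])
    case (1 s)
    show ?case
    proof (intro allI impI)
      fix m assume tm: "\<tau> \<le> m"
      show "valid_pol F M (c(i := s)) (seg s m) \<and> commits \<pi> (c(i := s)) (seg s m) \<and>
          Vz + E (?k s) (\<lambda>x. fv (min m x)) + Epos (?k s) m \<le> util M (c(i := s)) (seg s m)"
      proof (cases "s \<in> m_term ?Mi")
        case True
        let ?v = "m_val ?Mi s"
        have ks: "?k s = return_pmf ?v" by (rule kap_term[OF Mi Vi True])
        have Ev: "E (?k s) (\<lambda>x. fv (min m x)) = fv (min m ?v)" by (simp add: ks)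
        have Epv: "Epos (?k s) m = max 0 (?v - m)" by (simp add: ks Epos_def)
        show ?thesis
        proof (cases "\<tau> \<le> min m ?v")
          case True2: True
          have "seg s m = acc (min m ?v) s" using True True2 by (simp add: seg_eq Gseg_def)
          moreover have "fv (min m ?v) + max 0 (?v - m) = ?v + A (min m ?v)"
            using True2 by (simp add: fv_def min_def max_def)
          ultimately show ?thesis using acc[OF True, of "min m ?v"] Ev Epv by simp
        next
          case False2: False
          have "seg s m = rej (min m ?v) s" using True False2 tm by (simp add: seg_eq Gseg_def)
          moreover have "fv (min m ?v) + max 0 (?v - m) = B (min m ?v)"
          proof -
            have v: "?v < \<tau>" using False2 tm by (auto simp: min_def split: if_splits)
            then have "min m ?v = ?v" "max 0 (?v - m) = 0" using tm by auto
            then show ?thesis using v by (simp add: fv_def)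
          qed
          ultimately show ?thesis using rej[OF 1(2), of "min m ?v"] Ev Epv by simp
        qed
      next
        case False
        note sS = 1(2)
        have ks: "?k s = map_pmf (min (?g s)) (Kp ?Mi \<sigma>i s)" by (rule kap_nt[OF Mi Vi sS False])
        have fK: "finite (set_pmf (Kp ?Mi \<sigma>i s))" by (rule Kp_fin[OF Mi Vi sS False])
        show ?thesis
        proof (cases "?g s < \<tau>")
          case True
          have segs: "seg s m = rej (xs s m) s" using True False sS by (simp add: seg_eq Gseg_def)
          have supp: "x \<le> ?g s" if "x \<in> set_pmf (?k s)" for x using that ks by auto
          have "E (?k s) (\<lambda>x. fv (min m x)) = E (map_pmf (min m) (?k s)) B"
          proof -
            have "E (?k s) (\<lambda>x. fv (min m x)) = E (?k s) (\<lambda>x. B (min m x))"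
            proof (rule E_cong)
              fix x assume "x \<in> set_pmf (?k s)"
              then have "x \<le> ?g s" by (rule supp)
              then have "min m x < \<tau>" using True by (simp add: min_def)
              then have "\<not> \<tau> \<le> min m x" by linarith
              then show "fv (min m x) = B (min m x)" unfolding fv_def by (rule if_not_P)
            qed
            then show ?thesis by simp
          qed
          also have "\<dots> \<le> E (map_pmf (min m) (?k s)) (\<lambda>_. B (xs s m))"
            using xs[of s m] kap_fin[OF Mi Vi, of s] by (intro E_mono) auto
          finally have e1: "E (?k s) (\<lambda>x. fv (min m x)) \<le> B (xs s m)" by simp
          have e2: "Epos (?k s) m = 0"
          proof (rule Epos_zero)
            fix x assume "x \<in> set_pmf (?k s)"
            then have "x \<le> ?g s" by (rule supp)
            then show "x \<le> m" using True tm by simp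
          qed
          show ?thesis using rej[OF sS, of "xs s m"] segs e1 e2 by simp
        next
          case False3: False
          let ?m' = "min m (?g s)"
          let ?kk = "\<lambda>a s'. if s' \<in> set_pmf (?T s) then seg s' ?m' else Halt {}"
          have segs: "seg s m = Adv i (return_pmf (\<sigma>i s)) ?kk"
            using False3 False sS by (simp add: seg_eq Gseg_def)
          have tm': "\<tau> \<le> ?m'" using tm False3 by simp
          have IH: "valid_pol F M (c(i := s')) (seg s' ?m') \<and> commits \<pi> (c(i := s')) (seg s' ?m') \<and>
              Vz + E (?k s') (\<lambda>x. fv (min ?m' x)) + Epos (?k s') ?m' \<le> util M (c(i := s')) (seg s' ?m')"
            if s': "s' \<in> set_pmf (?T s)" for s'
            using 1(1)[OF sig_edge[OF Mi Vi sS False s'] sig_tr_states[OF Mi Vi sS False s']] tm' by blast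
          have act: "\<sigma>i s \<in> m_acts ?Mi s" by (rule sig_act[OF Mi Vi sS False])
          have finT: "finite (set_pmf (?T s))" by (rule sig_tr_fin[OF Mi Vi sS False])
          have valid: "valid_pol F M (c(i := s)) (seg s m)"
            unfolding segs
          proof (rule valid_pol.adv)
            show "(c(i := s)) i \<notin> m_term (M i)" using False by simp
            show "set_pmf (return_pmf (\<sigma>i s)) \<subseteq> m_acts (M i) ((c(i := s)) i)" using act by simp
            show "\<forall>a\<in>set_pmf (return_pmf (\<sigma>i s)). \<forall>s'\<in>set_pmf (m_trans (M i) ((c(i := s)) i) a).
                valid_pol F M ((c(i := s))(i := s')) (?kk a s')"
              using IH by simp
          qed
          have comm: "commits \<pi> (c(i := s)) (seg s m)"
            unfolding segs
          proof (rule commits.intros(2))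
            show "return_pmf (\<sigma>i s) = \<pi> i ((c(i := s)) i)" using pi by simp
            show "\<forall>a s'. commits \<pi> ((c(i := s))(i := s')) (?kk a s')"
              using IH by (auto intro: commits.intros(1))
          qed
          have "util M (c(i := s)) (seg s m) =
              - m_cost ?Mi s (\<sigma>i s) + E (?T s) (\<lambda>s'. util M (c(i := s')) (seg s' ?m'))"
          proof -
            have "util M (c(i := s)) (seg s m) =
              - m_cost ?Mi s (\<sigma>i s) + E (?T s) (\<lambda>s'. util M (c(i := s')) (?kk (\<sigma>i s) s'))"
              unfolding segs by simp
            also have "E (?T s) (\<lambda>s'. util M (c(i := s')) (?kk (\<sigma>i s) s')) =
                E (?T s) (\<lambda>s'. util M (c(i := s')) (seg s' ?m'))" by (rule E_cong) simp
            finally show ?thesis .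
          qed
          also have "\<dots> \<ge> - m_cost ?Mi s (\<sigma>i s) + E (?T s) (\<lambda>s'. Vz + E (?k s') (\<lambda>x. fv (min ?m' x)) + Epos (?k s') ?m')"
            using IH finT by (intro add_left_mono E_mono) auto
          finally have u: "- m_cost ?Mi s (\<sigma>i s) + E (?T s) (\<lambda>s'. Vz + E (?k s') (\<lambda>x. fv (min ?m' x)) + Epos (?k s') ?m')
              \<le> util M (c(i := s)) (seg s m)" .
          have "E (?T s) (\<lambda>s'. Vz + E (?k s') (\<lambda>x. fv (min ?m' x)) + Epos (?k s') ?m') =
              Vz + E (?T s) (\<lambda>s'. E (?k s') (\<lambda>x. fv (min ?m' x))) + E (?T s) (\<lambda>s'. Epos (?k s') ?m')"
            using finT by (simp add: E_add)
          also have "E (?T s) (\<lambda>s'. E (?k s') (\<lambda>x. fv (min ?m' x))) = E (Kp ?Mi \<sigma>i s) (\<lambda>x. fv (min ?m' x))"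
            by (rule E_Kp[OF Mi Vi sS False, symmetric])
          also have "\<dots> = E (?k s) (\<lambda>x. fv (min m x))"
            unfolding ks by (simp add: min.assoc)
          also have "E (?T s) (\<lambda>s'. Epos (?k s') ?m') = Epos (Kp ?Mi \<sigma>i s) ?m'"
            by (rule Epos_Kp[OF Mi Vi sS False, symmetric])
          finally have e: "E (?T s) (\<lambda>s'. Vz + E (?k s') (\<lambda>x. fv (min ?m' x)) + Epos (?k s') ?m') =
              Vz + E (?k s) (\<lambda>x. fv (min m x)) + Epos (Kp ?Mi \<sigma>i s) ?m'" .
          have "Epos (Kp ?Mi \<sigma>i s) ?m' - m_cost ?Mi s (\<sigma>i s) = max 0 (Epos (Kp ?Mi \<sigma>i s) m - m_cost ?Mi s (\<sigma>i s))"
            unfolding gg_def by (rule gval_prop2[OF fK sig_cost[OF Mi Vi sS False]])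
          also have "\<dots> = Epos (?k s) m" by (rule Epos_kap_nt[OF Mi Vi sS False, symmetric])
          finally have e2: "Epos (Kp ?Mi \<sigma>i s) ?m' - m_cost ?Mi s (\<sigma>i s) = Epos (?k s) m" .
          have "Vz + E (?k s) (\<lambda>x. fv (min m x)) + Epos (?k s) m \<le> util M (c(i := s)) (seg s m)"
            using u e e2 by simp
          then show ?thesis using valid comm by blast
        qed
      qed
    qed
  qed
  let ?r = "m_root ?Mi"
  define m0 where "m0 = max \<tau> (Max (set_pmf (?k ?r)))"
  have r: "?r \<in> m_states ?Mi" by (rule mdp_facts(2)[OF Mi])
  have fr: "finite (set_pmf (?k ?r))" by (rule kap_fin[OF Mi Vi])
  have le: "x \<le> m0" if "x \<in> set_pmf (?k ?r)" for x
    using Max_ge[OF fr that] unfolding m0_def by simp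
  have C: "valid_pol F M (c(i := ?r)) (seg ?r m0) \<and> commits \<pi> (c(i := ?r)) (seg ?r m0) \<and>
      Vz + E (?k ?r) (\<lambda>x. fv (min m0 x)) + Epos (?k ?r) m0 \<le> util M (c(i := ?r)) (seg ?r m0)"
    using claim[OF r] unfolding m0_def by simp
  have "E (?k ?r) (\<lambda>x. fv (min m0 x)) = E (?k ?r) fv"
  proof (rule E_cong)
    fix x assume "x \<in> set_pmf (?k ?r)"
    then have "min m0 x = x" using le by (simp add: min_absorb2)
    then show "fv (min m0 x) = fv x" by simp
  qed
  moreover have "Epos (?k ?r) m0 = 0" by (rule Epos_zero) (rule le)
  ultimately show ?thesis using C unfolding fv_def by auto
qed


lemma sim:
  fixes M :: "'n::finite \<Rightarrow> ('s,'a) mdp" and \<sigma> :: "'n \<Rightarrow> 's \<Rightarrow> 'a"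
  assumes MM: "\<forall>j. is_mdp (M j)" and VV: "\<forall>j. valid_sig (M j) (\<sigma> j)"
  shows "sadm F S R alg \<Longrightarrow> S \<in> F \<Longrightarrow> (\<forall>j. c j \<in> m_states (M j)) \<Longrightarrow> (\<forall>j\<in>S. c j \<in> m_term (M j)) \<Longrightarrow>
    (\<forall>j. j \<notin> S \<union> R \<longrightarrow> c j = m_root (M j)) \<Longrightarrow>
    \<exists>t. valid_pol F M c t \<and> commits (\<lambda>i s. return_pmf (\<sigma> i s)) c t \<and>
      (\<Sum>j\<in>S. m_val (M j) (c j)) + dval (\<lambda>i. kap (M i) (\<sigma> i) (m_root (M i))) alg \<le> util M c t"
proof (induction arbitrary: c rule: sadm.induct)
  case (sadm_halt S R)
  have "valid_pol F M c (Halt S)" using sadm_halt by (intro valid_pol.halt) auto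
  moreover have "commits (\<lambda>i s. return_pmf (\<sigma> i s)) c (Halt S)" by (rule commits.intros(1))
  ultimately show ?case by force
next
  case (sadm_probe i S R ka kr \<tau>)
  let ?P = "\<lambda>i. kap (M i) (\<sigma> i) (m_root (M i))"
  let ?\<pi> = "\<lambda>i s. return_pmf (\<sigma> i s)"
  let ?V0 = "\<Sum>j\<in>S. m_val (M j) (c j)"
  have iS: "i \<notin> S" and iR: "i \<notin> R" using sadm_probe(1) by auto
  have ci: "c i = m_root (M i)" using sadm_probe.prems(4) iS iR by auto
  have Mi: "is_mdp (M i)" using MM by auto
  have Vi: "valid_sig (M i) (\<sigma> i)" using VV by auto
  have sumS: "(\<Sum>j\<in>S. m_val (M j) ((c(i := s)) j)) = ?V0" for s
    using iS by (intro sum.cong) auto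
  have IHa: "\<forall>c. insert i S \<in> F \<longrightarrow> (\<forall>j. c j \<in> m_states (M j)) \<longrightarrow> (\<forall>j\<in>insert i S. c j \<in> m_term (M j)) \<longrightarrow>
    (\<forall>j. j \<notin> insert i S \<union> R \<longrightarrow> c j = m_root (M j)) \<longrightarrow>
    (\<exists>t. valid_pol F M c t \<and> commits ?\<pi> c t \<and> (\<Sum>j\<in>insert i S. m_val (M j) (c j)) + dval ?P (ka x) \<le> util M c t)" for x
    using sadm_probe(3) by blast
  have IHr: "\<forall>c. S \<in> F \<longrightarrow> (\<forall>j. c j \<in> m_states (M j)) \<longrightarrow> (\<forall>j\<in>S. c j \<in> m_term (M j)) \<longrightarrow>
    (\<forall>j. j \<notin> S \<union> insert i R \<longrightarrow> c j = m_root (M j)) \<longrightarrow>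
    (\<exists>t. valid_pol F M c t \<and> commits ?\<pi> c t \<and> (\<Sum>j\<in>S. m_val (M j) (c j)) + dval ?P (kr x) \<le> util M c t)" for x
    using sadm_probe(4) by blast
  have accH: "\<exists>t. valid_pol F M (c(i := s)) t \<and> commits ?\<pi> (c(i := s)) t \<and>
         ?V0 + m_val (M i) s + dval ?P (ka x) \<le> util M (c(i := s)) t" if s: "s \<in> m_term (M i)" for x s
  proof -
    have sS: "s \<in> m_states (M i)" using s mdp_facts(3)[OF Mi] by blast
    have "\<exists>t. valid_pol F M (c(i := s)) t \<and> commits ?\<pi> (c(i := s)) t \<and>
      (\<Sum>j\<in>insert i S. m_val (M j) ((c(i := s)) j)) + dval ?P (ka x) \<le> util M (c(i := s)) t"
    proof -
      have h1: "insert i S \<in> F" by (rule sadm_probe(2))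
      have h2: "\<forall>j. (c(i := s)) j \<in> m_states (M j)" using sadm_probe.prems(2) sS by auto
      have h3: "\<forall>j\<in>insert i S. (c(i := s)) j \<in> m_term (M j)" using sadm_probe.prems(3) s by auto
      have h4: "\<forall>j. j \<notin> insert i S \<union> R \<longrightarrow> (c(i := s)) j = m_root (M j)" using sadm_probe.prems(4) by auto
      show ?thesis using mp[OF mp[OF mp[OF mp[OF spec[OF IHa[of x], of "c(i := s)"] h1] h2] h3] h4] .
    qed
    moreover have "(\<Sum>j\<in>insert i S. m_val (M j) ((c(i := s)) j)) = m_val (M i) s + ?V0"
      using iS sumS[of s] by (simp add: sum.insert_if)
    ultimately show ?thesis by (simp add: algebra_simps)
  qed
  have rejH: "\<exists>t. valid_pol F M (c(i := s)) t \<and> commits ?\<pi> (c(i := s)) t \<and>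
         ?V0 + dval ?P (kr x) \<le> util M (c(i := s)) t" if s: "s \<in> m_states (M i)" for x s
  proof -
    have "\<exists>t. valid_pol F M (c(i := s)) t \<and> commits ?\<pi> (c(i := s)) t \<and>
      (\<Sum>j\<in>S. m_val (M j) ((c(i := s)) j)) + dval ?P (kr x) \<le> util M (c(i := s)) t"
    proof -
      have h1: "S \<in> F" by (rule sadm_probe.prems(1))
      have h2: "\<forall>j. (c(i := s)) j \<in> m_states (M j)" using sadm_probe.prems(2) s by auto
      have h3: "\<forall>j\<in>S. (c(i := s)) j \<in> m_term (M j)" using sadm_probe.prems(3) iS by auto
      have h4: "\<forall>j. j \<notin> S \<union> insert i R \<longrightarrow> (c(i := s)) j = m_root (M j)" using sadm_probe.prems(4) by auto
      show ?thesis using mp[OF mp[OF mp[OF mp[OF spec[OF IHr[of x], of "c(i := s)"] h1] h2] h3] h4] .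
    qed
    then show ?thesis using sumS[of s] by simp
  qed
  have "\<exists>t. valid_pol F M (c(i := m_root (M i))) t \<and> commits ?\<pi> (c(i := m_root (M i))) t \<and>
     ?V0 + E (kap (M i) (\<sigma> i) (m_root (M i))) (\<lambda>x. if \<tau> \<le> x then x + dval ?P (ka x) else dval ?P (kr x))
       \<le> util M (c(i := m_root (M i))) t"
    by (rule seg_lemma[where M=M and i=i and \<sigma>i="\<sigma> i" and \<pi>="?\<pi>" and c=c and F=F and Vz="?V0"
          and A="\<lambda>x. dval ?P (ka x)" and B="\<lambda>x. dval ?P (kr x)", OF Mi Vi]) (auto intro: accH rejH)
  moreover have "c(i := m_root (M i)) = c" using ci by auto
  ultimately show ?case by simp
qed


lemma roots_states: "\<forall>j. is_mdp (M j) \<Longrightarrow> \<forall>j. roots M j \<in> m_states (M j)"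
  unfolding roots_def using mdp_facts(2) by blast

lemma util_bdd:
  fixes M :: "'n::finite \<Rightarrow> ('s,'a) mdp"
  assumes MM: "\<forall>j. is_mdp (M j)"
  shows "bdd_above {util M (roots M) t | t. valid_pol F M (roots M) t}"
proof -
  have "util M (roots M) t \<le> (\<Sum>j\<in>UNIV. W (M j) 0 (roots M j))" if "valid_pol F M (roots M) t" for t
    using lag[OF that MM roots_states[OF MM], of "\<lambda>_. 0"] by simp
  then show ?thesis unfolding bdd_above_def by blast
qed

lemma commit_ge:
  fixes M :: "'n::finite \<Rightarrow> ('s,'a) mdp"
  assumes MM: "\<forall>j. is_mdp (M j)" and "commitment M \<pi>" "valid_pol F M (roots M) t" "commits \<pi> (roots M) t"
  shows "util M (roots M) t \<le> commit_OPT F M"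
  unfolding commit_OPT_def
proof (rule cSup_upper)
  show "util M (roots M) t \<in> {util M (roots M) t | t \<pi>. commitment M \<pi> \<and> valid_pol F M (roots M) t \<and> commits \<pi> (roots M) t}"
    using assms by blast
  have "{util M (roots M) t | t \<pi>. commitment M \<pi> \<and> valid_pol F M (roots M) t \<and> commits \<pi> (roots M) t}
     \<subseteq> {util M (roots M) t | t. valid_pol F M (roots M) t}" by blast
  then show "bdd_above {util M (roots M) t | t \<pi>. commitment M \<pi> \<and> valid_pol F M (roots M) t \<and> commits \<pi> (roots M) t}"
    by (rule bdd_above_mono[OF util_bdd[OF MM, of F]])
qed

lemma opt_ge:
  fixes M :: "'n::finite \<Rightarrow> ('s,'a) mdp"
  assumes MM: "\<forall>j. is_mdp (M j)" and "valid_pol F M (roots M) t"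
  shows "util M (roots M) t \<le> OPT F M"
  unfolding OPT_def
proof (rule cSup_upper)
  show "util M (roots M) t \<in> {util M (roots M) t | t. valid_pol F M (roots M) t}" using assms by blast
  show "bdd_above {util M (roots M) t | t. valid_pol F M (roots M) t}" by (rule util_bdd[OF MM])
qed

lemma commitment_sig:
  assumes "\<forall>j. valid_sig (M j) (\<sigma> j)"
  shows "commitment M (\<lambda>i s. return_pmf (\<sigma> i s))"
  unfolding commitment_def using assms unfolding valid_sig_def by auto

lemma halt_valid: "{} \<in> F \<Longrightarrow> valid_pol F M c (Halt {})"
  by (rule valid_pol.halt) auto

lemma commit_nonneg:
  fixes M :: "'n::finite \<Rightarrow> ('s,'a) mdp"
  assumes MM: "\<forall>j. is_mdp (M j)" and F0: "{} \<in> F"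
  shows "0 \<le> commit_OPT F M"
proof -
  have "util M (roots M) (Halt {}) \<le> commit_OPT F M"
  proof (rule commit_ge[OF MM])
    show "commitment M (\<lambda>i s. return_pmf (gsig (M i) 0 s))"
      by (rule commitment_sig) (use MM gsig_valid in blast)
    show "valid_pol F M (roots M) (Halt {})" by (rule halt_valid[OF F0])
    show "commits (\<lambda>i s. return_pmf (gsig (M i) 0 s)) (roots M) (Halt {})" by (rule commits.intros(1))
  qed
  then show ?thesis by simp
qed

lemma mix_bound:
  fixes M :: "'n::finite \<Rightarrow> ('s,'a) mdp" and \<sigma>1 \<sigma>2 :: "'n \<Rightarrow> 's \<Rightarrow> 'a"
  assumes MM: "\<forall>j. is_mdp (M j)" and V1: "\<forall>j. valid_sig (M j) (\<sigma>1 j)" and V2: "\<forall>j. valid_sig (M j) (\<sigma>2 j)"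
    and al: "\<forall>j. 0 \<le> \<alpha> j \<and> \<alpha> j \<le> 1" and F0: "{} \<in> F" and alg: "sadm F {} {} alg"
  shows "dval (\<lambda>i. mixp (\<alpha> i) (kap (M i) (\<sigma>1 i) (m_root (M i))) (kap (M i) (\<sigma>2 i) (m_root (M i)))) alg \<le> commit_OPT F M"
proof -
  let ?K1 = "\<lambda>i. kap (M i) (\<sigma>1 i) (m_root (M i))"
  let ?K2 = "\<lambda>i. kap (M i) (\<sigma>2 i) (m_root (M i))"
  let ?Pm = "\<lambda>i. mixp (\<alpha> i) (?K1 i) (?K2 i)"
  define PJ where "PJ J ch = (\<lambda>i. if i \<in> J then ?Pm i else if ch i then ?K1 i else ?K2 i)" for J ch
  have f1: "finite (set_pmf (?K1 i))" for i using kap_fin[OF spec[OF MM] spec[OF V1]] .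
  have f2: "finite (set_pmf (?K2 i))" for i using kap_fin[OF spec[OF MM] spec[OF V2]] .
  have fPJ: "finite (set_pmf (PJ J ch i))" for J ch i
    unfolding PJ_def using f1[of i] f2[of i] finite_mixp[OF f1[of i] f2[of i]] by simp
  have main: "\<forall>ch. dval (PJ J ch) alg \<le> commit_OPT F M" if "finite J" for J
    using that
  proof (induction J rule: finite_induct)
    case empty
    show ?case
    proof
      fix ch
      define \<sigma>c where "\<sigma>c i = (if ch i then \<sigma>1 i else \<sigma>2 i)" for i
      have Vc: "\<forall>j. valid_sig (M j) (\<sigma>c j)" unfolding \<sigma>c_def using V1 V2 by auto
      have eqP: "PJ {} ch = (\<lambda>i. kap (M i) (\<sigma>c i) (m_root (M i)))"
        unfolding PJ_def \<sigma>c_def by (intro ext) simp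
      have "\<exists>t. valid_pol F M (roots M) t \<and> commits (\<lambda>i s. return_pmf (\<sigma>c i s)) (roots M) t \<and>
         (\<Sum>j\<in>{}. m_val (M j) (roots M j)) + dval (\<lambda>i. kap (M i) (\<sigma>c i) (m_root (M i))) alg \<le> util M (roots M) t"
      proof (rule sim[OF MM Vc alg F0])
        show "\<forall>j. roots M j \<in> m_states (M j)" by (rule roots_states[OF MM])
        show "\<forall>j\<in>{}. roots M j \<in> m_term (M j)" by simp
        show "\<forall>j. j \<notin> {} \<union> {} \<longrightarrow> roots M j = m_root (M j)" by (simp add: roots_def)
      qed
      then obtain t where t: "valid_pol F M (roots M) t" "commits (\<lambda>i s. return_pmf (\<sigma>c i s)) (roots M) t"
        "dval (\<lambda>i. kap (M i) (\<sigma>c i) (m_root (M i))) alg \<le> util M (roots M) t" by auto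
      have "util M (roots M) t \<le> commit_OPT F M"
        by (rule commit_ge[OF MM commitment_sig[OF Vc] t(1,2)])
      then show "dval (PJ {} ch) alg \<le> commit_OPT F M" using t(3) eqP by simp
    qed
  next
    case (insert j J)
    show ?case
    proof
      fix ch
      let ?Q = "PJ J ch"
      have e: "PJ (insert j J) ch = ?Q(j := ?Pm j)" unfolding PJ_def using insert(2) by (intro ext) simp
      have e1: "?Q(j := ?K1 j) = PJ J (ch(j := True))" unfolding PJ_def using insert(2) by (intro ext) simp
      have e2: "?Q(j := ?K2 j) = PJ J (ch(j := False))" unfolding PJ_def using insert(2) by (intro ext) simp
      have a0: "0 \<le> \<alpha> j" and a1: "\<alpha> j \<le> 1" using al by auto
      have fQ: "\<forall>i. finite (set_pmf (?Q i))" using fPJ by blast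
      have "dval (?Q(j := ?Pm j)) alg = \<alpha> j * dval (?Q(j := ?K1 j)) alg + (1 - \<alpha> j) * dval (?Q(j := ?K2 j)) alg"
        by (rule dval_lin[OF fQ f1 f2 a0 a1 alg]) simp
      also have "\<dots> \<le> \<alpha> j * commit_OPT F M + (1 - \<alpha> j) * commit_OPT F M"
        using insert(3) e1 e2 a0 a1 by (intro add_mono mult_left_mono) auto
      also have "\<dots> = commit_OPT F M" by (simp add: algebra_simps)
      finally show "dval (PJ (insert j J) ch) alg \<le> commit_OPT F M" using e by simp
    qed
  qed
  have "PJ UNIV (\<lambda>_. True) = ?Pm" unfolding PJ_def by simp
  moreover have "dval (PJ UNIV (\<lambda>_. True)) alg \<le> commit_OPT F M" using main[of UNIV] by simp
  ultimately show ?thesis by simp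
qed

lemma FO_bound:
  fixes M :: "'n::finite \<Rightarrow> ('s,'a) mdp" and \<sigma>1 \<sigma>2 :: "'n \<Rightarrow> 's \<Rightarrow> 'a"
  assumes MM: "\<forall>j. is_mdp (M j)" and V1: "\<forall>j. valid_sig (M j) (\<sigma>1 j)" and V2: "\<forall>j. valid_sig (M j) (\<sigma>2 j)"
    and al: "\<forall>j. 0 \<le> \<alpha> j \<and> \<alpha> j \<le> 1" and F0: "{} \<in> F"
  defines "Pm \<equiv> \<lambda>i. mixp (\<alpha> i) (kap (M i) (\<sigma>1 i) (m_root (M i))) (kap (M i) (\<sigma>2 i) (m_root (M i)))"
  shows "FreeOrder F (\<lambda>i. Dm (Pm i)) \<le> commit_OPT F M \<and> 0 \<le> FreeOrder F (\<lambda>i. Dm (Pm i))"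
proof -
  let ?D = "\<lambda>i. Dm (Pm i)"
  let ?S = "{fo_val ?D t | t. fo_adm F ?D {} {} t}"
  have bd: "x \<le> commit_OPT F M" if "x \<in> ?S" for x
  proof -
    obtain t where t: "x = fo_val ?D t" "fo_adm F ?D {} {} t" using \<open>x \<in> ?S\<close> by blast
    have "fo_val ?D t = dval Pm t" by (rule fo_dval[OF t(2)])
    also have "\<dots> \<le> commit_OPT F M" unfolding Pm_def by (rule mix_bound[OF MM V1 V2 al F0 fo_sadm[OF t(2)]])
    finally show ?thesis using t(1) by simp
  qed
  have zero: "0 \<in> ?S"
  proof -
    have "fo_adm F ?D {} {} FHalt" by (rule fo_adm.intros(1))
    then show ?thesis by force
  qed
  have "Sup ?S \<le> commit_OPT F M" by (rule cSup_least) (use zero bd in auto)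
  moreover have "0 \<le> Sup ?S" by (rule cSup_upper[OF zero]) (use bd in \<open>auto simp: bdd_above_def\<close>)
  ultimately show ?thesis unfolding FreeOrder_def by simp
qed


lemma ratio_eq: "ereal a / ereal b = (if b = 0 then (if 0 < a then \<infinity> else if a < 0 then -\<infinity> else 0) else ereal (a / b))"
  by (simp add: divide_ereal_def divide_inverse)

lemma ratio_le:
  fixes u a b c :: real
  assumes "0 \<le> a" "u \<le> a" "0 \<le> b" "b \<le> c"
  shows "ereal u / ereal c \<le> ereal a / ereal b"
proof (cases "c = 0")
  case True
  then have b0: "b = 0" using assms by simp
  show ?thesis using True b0 assms by (simp add: ratio_eq)
next
  case False
  then have cp: "0 < c" using assms by simp
  show ?thesis
  proof (cases "b = 0")
    case True
    then show ?thesis using False assms cp by (auto simp: ratio_eq divide_nonpos_pos)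
  next
    case False2: False
    then have bp: "0 < b" using assms by simp
    have "u / c \<le> a / b"
    proof (cases "u \<le> 0")
      case True
      then have "u / c \<le> 0" using cp by (simp add: divide_nonpos_pos)
      also have "0 \<le> a / b" using assms bp by simp
      finally show ?thesis .
    next
      case False
      have "u / c \<le> a / c" using assms cp by (simp add: divide_right_mono)
      also have "\<dots> \<le> a / b" using assms bp by (intro divide_left_mono) auto
      finally show ?thesis .
    qed
    then show ?thesis using False False2 by (simp add: ratio_eq)
  qed
qed

lemma key:
  fixes F :: "'n::finite set set" and M :: "'n \<Rightarrow> ('s,'a) mdp"
  assumes F0: "{} \<in> F" and MM: "\<forall>j. is_mdp (M j)" and t: "valid_pol F M (roots M) t"
  shows "\<exists>D. product_dist D \<and> util M (roots M) t \<le> ExAnte F D \<and> 0 \<le> ExAnte F D \<and>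
     FreeOrder F D \<le> commit_OPT F M \<and> 0 \<le> FreeOrder F D"
proof -
  define Q where "Q i = Qp M (roots M) t i" for i
  have qpoly: "(\<chi> j. Q j) \<in> polytope F" unfolding Q_def by (rule Q_poly[OF t MM roots_states[OF MM]])
  have Q01: "0 \<le> Q i" "Q i \<le> 1" for i using poly_box[OF qpoly, of i] by auto
  define K where "K i \<sigma> = kap (M i) \<sigma> (m_root (M i))" for i \<sigma>
  have fK: "finite (set_pmf (K i \<sigma>))" if "\<sigma> \<in> sigs (M i)" for i \<sigma>
    unfolding K_def using kap_fin[OF spec[OF MM] sigs_valid[OF that]] .
  define Cond where "Cond i z = (case z of (l, s1, s2, a) \<Rightarrow> s1 \<in> sigs (M i) \<and> s2 \<in> sigs (M i) \<and> 0 \<le> a \<and> a \<le> 1 \<and>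
     (\<forall>\<sigma>\<in>sigs (M i). Epos (K i \<sigma>) l \<le> Epos (K i s1) l) \<and> Epos (K i s2) l = Epos (K i s1) l \<and>
     Pgt (mixp a (K i s1) (K i s2)) l \<le> Q i \<and> Q i \<le> Pge (mixp a (K i s1) (K i s2)) l)" for i z
  have exz: "\<exists>z. Cond i z" for i
  proof -
    have Mi: "is_mdp (M i)" using MM by blast
    have "\<exists>l \<sigma>1 \<sigma>2 \<alpha>. \<sigma>1 \<in> sigs (M i) \<and> \<sigma>2 \<in> sigs (M i) \<and> 0 \<le> \<alpha> \<and> \<alpha> \<le> 1 \<and>
     (\<forall>\<sigma>\<in>sigs (M i). Epos (K i \<sigma>) l \<le> Epos (K i \<sigma>1) l) \<and> Epos (K i \<sigma>2) l = Epos (K i \<sigma>1) l \<and>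
     Pgt (mixp \<alpha> (K i \<sigma>1) (K i \<sigma>2)) l \<le> Q i \<and> Q i \<le> Pge (mixp \<alpha> (K i \<sigma>1) (K i \<sigma>2)) l"
    proof (rule choose)
      show "finite (sigs (M i))" by (rule sigs_fin[OF Mi])
      show "sigs (M i) \<noteq> {}" using gsig_in[OF Mi] by blast
      show "\<And>\<sigma>. \<sigma> \<in> sigs (M i) \<Longrightarrow> finite (set_pmf (K i \<sigma>))" by (rule fK)
      show "0 \<le> Q i" "Q i \<le> 1" by (rule Q01)+
    qed
    then obtain l s1 s2 a where "s1 \<in> sigs (M i) \<and> s2 \<in> sigs (M i) \<and> 0 \<le> a \<and> a \<le> 1 \<and>
     (\<forall>\<sigma>\<in>sigs (M i). Epos (K i \<sigma>) l \<le> Epos (K i s1) l) \<and> Epos (K i s2) l = Epos (K i s1) l \<and>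
     Pgt (mixp a (K i s1) (K i s2)) l \<le> Q i \<and> Q i \<le> Pge (mixp a (K i s1) (K i s2)) l" by blast
    then have "Cond i (l, s1, s2, a)" unfolding Cond_def by simp
    then show ?thesis by blast
  qed
  define z where "z i = (SOME z. Cond i z)" for i
  have cz: "Cond i (z i)" for i unfolding z_def by (rule someI_ex[OF exz])
  define l where "l i = fst (z i)" for i
  define \<sigma>1 where "\<sigma>1 i = fst (snd (z i))" for i
  define \<sigma>2 where "\<sigma>2 i = fst (snd (snd (z i)))" for i
  define \<alpha> where "\<alpha> i = snd (snd (snd (z i)))" for i
  have zi: "z i = (l i, \<sigma>1 i, \<sigma>2 i, \<alpha> i)" for i unfolding l_def \<sigma>1_def \<sigma>2_def \<alpha>_def by simp
  have C: "\<sigma>1 i \<in> sigs (M i) \<and> \<sigma>2 i \<in> sigs (M i) \<and> 0 \<le> \<alpha> i \<and> \<alpha> i \<le> 1 \<and>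
     (\<forall>\<sigma>\<in>sigs (M i). Epos (K i \<sigma>) (l i) \<le> Epos (K i (\<sigma>1 i)) (l i)) \<and> Epos (K i (\<sigma>2 i)) (l i) = Epos (K i (\<sigma>1 i)) (l i) \<and>
     Pgt (mixp (\<alpha> i) (K i (\<sigma>1 i)) (K i (\<sigma>2 i))) (l i) \<le> Q i \<and> Q i \<le> Pge (mixp (\<alpha> i) (K i (\<sigma>1 i)) (K i (\<sigma>2 i))) (l i)" for i
    using cz[of i] unfolding zi Cond_def by simp
  have V1: "\<forall>j. valid_sig (M j) (\<sigma>1 j)" using C sigs_valid by blast
  have V2: "\<forall>j. valid_sig (M j) (\<sigma>2 j)" using C sigs_valid by blast
  have al: "\<forall>j. 0 \<le> \<alpha> j \<and> \<alpha> j \<le> 1" using C by blast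
  define Pm where "Pm i = mixp (\<alpha> i) (K i (\<sigma>1 i)) (K i (\<sigma>2 i))" for i
  have f1: "finite (set_pmf (K i (\<sigma>1 i)))" for i using fK C by blast
  have f2: "finite (set_pmf (K i (\<sigma>2 i)))" for i using fK C by blast
  have fP: "finite (set_pmf (Pm i))" for i unfolding Pm_def by (rule finite_mixp[OF f1 f2])
  define D where "D i = Dm (Pm i)" for i
  have pd: "product_dist D"
    unfolding product_dist_def D_def
  proof (intro allI conjI)
    fix i
    show "prob_space (Dm (Pm i))" by (rule Dm_prob)
    show "sets (Dm (Pm i)) = sets borel" by (rule Dm_sets)
    show "integrable (Dm (Pm i)) (\<lambda>x. x)" by (rule Dm_integrable[OF fP]) simp
  qed
  have FO: "FreeOrder F D \<le> commit_OPT F M \<and> 0 \<le> FreeOrder F D"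
  proof -
    have "D = (\<lambda>i. Dm (mixp (\<alpha> i) (kap (M i) (\<sigma>1 i) (m_root (M i))) (kap (M i) (\<sigma>2 i) (m_root (M i)))))"
      unfolding D_def Pm_def K_def by simp
    then show ?thesis using FO_bound[OF MM V1 V2 al F0] by simp
  qed
  let ?Set = "{\<Sum>i\<in>UNIV. q $ i * F_top (D i) (q $ i) | q. q \<in> polytope F}"
  have bdd: "bdd_above ?Set"
  proof -
    have "y \<le> (\<Sum>i\<in>UNIV. E (Pm i) (\<lambda>x. \<bar>x\<bar>))" if yS: "y \<in> ?Set" for y
    proof -
      obtain q where q: "y = (\<Sum>i\<in>UNIV. q $ i * F_top (D i) (q $ i))" "q \<in> polytope F" using yS by blast
      have "q $ i * F_top (D i) (q $ i) \<le> E (Pm i) (\<lambda>x. \<bar>x\<bar>)" for i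
        unfolding D_def using poly_box[OF q(2), of i] by (intro qF_bound[OF fP]) auto
      then show ?thesis unfolding q(1) by (intro sum_mono)
    qed
    then show ?thesis unfolding bdd_above_def by blast
  qed
  have "util M (roots M) t \<le> (\<Sum>j\<in>UNIV. l j * Q j) + (\<Sum>j\<in>UNIV. W (M j) (l j) (roots M j))"
    unfolding Q_def by (rule lag[OF t MM roots_states[OF MM]])
  also have "\<dots> = (\<Sum>j\<in>UNIV. Q j * F_top (D j) (Q j))"
  proof -
    have "l j * Q j + W (M j) (l j) (roots M j) = Q j * F_top (D j) (Q j)" for j
    proof -
      have Mj: "is_mdp (M j)" using MM by blast
      have r: "m_root (M j) \<in> m_states (M j)" by (rule mdp_facts(2)[OF Mj])
      have "W (M j) (l j) (roots M j) = Max ((\<lambda>\<sigma>. Epos (K j \<sigma>) (l j)) ` sigs (M j))"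
        unfolding roots_def K_def by (rule W_Max[OF Mj r])
      also have "\<dots> = Epos (K j (\<sigma>1 j)) (l j)"
      proof (rule Max_eqI)
        show "finite ((\<lambda>\<sigma>. Epos (K j \<sigma>) (l j)) ` sigs (M j))" using sigs_fin[OF Mj] by simp
        show "\<And>y. y \<in> (\<lambda>\<sigma>. Epos (K j \<sigma>) (l j)) ` sigs (M j) \<Longrightarrow> y \<le> Epos (K j (\<sigma>1 j)) (l j)"
          using C[of j] by blast
        show "Epos (K j (\<sigma>1 j)) (l j) \<in> (\<lambda>\<sigma>. Epos (K j \<sigma>) (l j)) ` sigs (M j)" using C[of j] by blast
      qed
      also have "\<dots> = Epos (Pm j) (l j)"
      proof -
        have "Epos (Pm j) (l j) = \<alpha> j * Epos (K j (\<sigma>1 j)) (l j) + (1 - \<alpha> j) * Epos (K j (\<sigma>2 j)) (l j)"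
          unfolding Pm_def Epos_def using al by (intro E_mixp[OF f1 f2]) auto
        then show ?thesis using C[of j] by (simp add: algebra_simps)
      qed
      finally have "W (M j) (l j) (roots M j) = Epos (Pm j) (l j)" .
      moreover have "Q j * F_top (D j) (Q j) = l j * Q j + Epos (Pm j) (l j)"
        unfolding D_def by (rule qF[OF fP Q01]) (use C[of j] in \<open>simp_all add: Pm_def\<close>)
      ultimately show ?thesis by simp
    qed
    then show ?thesis by (simp add: sum.distrib[symmetric])
  qed
  also have "\<dots> \<le> ExAnte F D"
    unfolding ExAnte_def
  proof (rule cSup_upper[OF _ bdd])
    have "(\<Sum>j\<in>UNIV. Q j * F_top (D j) (Q j)) = (\<Sum>i\<in>UNIV. (\<chi> j. Q j) $ i * F_top (D i) ((\<chi> j. Q j) $ i))" by simp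
    then show "(\<Sum>j\<in>UNIV. Q j * F_top (D j) (Q j)) \<in> ?Set" using qpoly by blast
  qed
  finally have ex: "util M (roots M) t \<le> ExAnte F D" .
  have ex0: "0 \<le> ExAnte F D"
    unfolding ExAnte_def
  proof (rule cSup_upper2[OF _ _ bdd])
    have "indic_vec {} \<in> polytope F" unfolding polytope_def using F0 by (simp add: hull_inc)
    moreover have "indic_vec {} = (0 :: real ^ 'n)" by (simp add: indic_vec_def vec_eq_iff)
    ultimately have "(0 :: real ^ 'n) \<in> polytope F" by simp
    then show "(\<Sum>i\<in>UNIV. (0 :: real ^ 'n) $ i * F_top (D i) ((0 :: real ^ 'n) $ i)) \<in> ?Set" by blast
  qed simp
  show ?thesis using pd ex ex0 FO by blast
qed


theorem corollary1:
  fixes F :: "'n::finite set set" and M :: "'n \<Rightarrow> ('s,'a) mdp"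
  assumes "{} \<in> F" and "downward_closed F" and "\<forall>i. is_mdp (M i)"
  shows "ComGap F M \<le>
    (SUP D \<in> {D. product_dist D}. ereal (ExAnte F D) / ereal (FreeOrder F D))"
proof -
  note F0 = assms(1) and MM = assms(3)
  define R where "R = (SUP D \<in> {D. product_dist D}. ereal (ExAnte F D) / ereal (FreeOrder F D))"
  define U where "U = {util M (roots M) t | t. valid_pol F M (roots M) t}"
  define c where "c = commit_OPT F M"
  have c0: "0 \<le> c" unfolding c_def by (rule commit_nonneg[OF MM F0])
  have A: "ereal (util M (roots M) t) / ereal c \<le> R" if t: "valid_pol F M (roots M) t" for t
  proof -
    obtain D where D: "product_dist D" "util M (roots M) t \<le> ExAnte F D" "0 \<le> ExAnte F D"
      "FreeOrder F D \<le> commit_OPT F M" "0 \<le> FreeOrder F D" using key[OF F0 MM t] by blast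
    have "ereal (util M (roots M) t) / ereal c \<le> ereal (ExAnte F D) / ereal (FreeOrder F D)"
      using D unfolding c_def by (intro ratio_le) auto
    also have "\<dots> \<le> R" unfolding R_def using D(1) by (intro SUP_upper) simp
    finally show ?thesis .
  qed
  have h0: "valid_pol F M (roots M) (Halt {})" by (rule halt_valid[OF F0])
  have "ereal (util M (roots M) (Halt {})) / ereal c = 0" by (subst ratio_eq) simp
  then have R0: "0 \<le> R" using A[OF h0] by simp
  have Une: "U \<noteq> {}" unfolding U_def using h0 by blast
  have Ubdd: "bdd_above U" unfolding U_def by (rule util_bdd[OF MM])
  have opt: "OPT F M = Sup U" unfolding OPT_def U_def ..
  have opt0: "0 \<le> OPT F M" using opt_ge[OF MM h0] by simp
  have goal: "ereal (OPT F M) / ereal c \<le> R"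
  proof (cases "c = 0")
    case True
    show ?thesis
    proof (cases "0 < OPT F M")
      case True2: True
      then obtain u where u: "u \<in> U" "0 < u" using less_cSup_iff[OF Une Ubdd] opt by auto
      then obtain t where t: "valid_pol F M (roots M) t" "u = util M (roots M) t" unfolding U_def by blast
      have "\<infinity> \<le> R" using A[OF t(1)] True u t(2) by (simp add: ratio_eq)
      then show ?thesis by simp
    next
      case False
      then have "OPT F M = 0" using opt0 by simp
      then show ?thesis using R0 by (subst ratio_eq) (simp add: zero_ereal_def[symmetric])
    qed
  next
    case False
    then have cp: "0 < c" using c0 by simp
    show ?thesis
    proof (rule ccontr)
      assume "\<not> ?thesis"
      then have lt: "R < ereal (OPT F M / c)" using False by (simp add: ratio_eq)
      then have "R \<noteq> \<infinity>" by auto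
      moreover have "R \<noteq> -\<infinity>" using R0 by auto
      ultimately obtain r where r: "R = ereal r" by (cases R) auto
      then have "r < OPT F M / c" using lt by simp
      then have "r * c < Sup U" using cp opt by (simp add: pos_less_divide_eq)
      then obtain u where u: "u \<in> U" "r * c < u" using less_cSup_iff[OF Une Ubdd] by auto
      then obtain t where t: "valid_pol F M (roots M) t" "u = util M (roots M) t" unfolding U_def by blast
      have "ereal (u / c) \<le> ereal r" using A[OF t(1)] t(2) r False by (simp add: ratio_eq)
      then have "u / c \<le> r" by simp
      then have "u \<le> r * c" using cp by (simp add: divide_le_eq)
      then show False using u(2) by simp
    qed
  qed
  show ?thesis unfolding ComGap_def using goal unfolding R_def c_def .
qed


end
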